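(* Under the standing assumptions of the context, for any real $a<b$, $\|\widehat{\varphi_l}\,'-\widehat{\varphi^M}\,'\|_{C[a,b]}=O(\mu(l))$ as $l\to\infty$, where $'$ denotes differentiation in $\omega$ and $\|\cdot\|_{C[a,b]}$ is the sup norm on $[a,b]$.
   Context: Fourier transform: $\widehat f(\omega)=\int_{\mathbb{R}}f(t)e^{-it\omega}\,dt$. Let $\theta$ be odd, non-decreasing, $C^2$, with $\theta(\omega)=\pi/4$ for $\omega>\pi/3$; fix $\pi/3\le\omega_0<\pi/2$. Meyer scaling function: $\widehat{\varphi^M}(\omega)=1$ for $|\omega|\le2\omega_0$, $=\cos(\frac\pi4+\theta(\frac{\pi}{3(\pi-2\omega_0)}(|\omega|-\pi)))$ for $2\omega_0<|\omega|\le2\pi-2\omega_0$, $=0$ otherwise. Meyer mask: $2\pi$-periodic $m^M$ with $m^M(\omega)=\widehat{\varphi^M}(2\omega)$ on $[-\pi,\pi]$. $\|\cdot\|_C$: sup norm on $[-\pi,\pi]$. A linear method of summation $(\lambda_{n,k})$ maps $f$ with Fourier coefficients $a_k,b_k$ to $u_n(f,\omega)=\frac{a_0}2+\sum_{k=1}^n\lambda_{n,k}(a_k\cos k\omega+b_k\sin k\omega)$. $m^M_l:=m^M/(\cos\frac\omega2)^{2l}$. Standing assumptions: a method and a sequence $n(l)$ are fixed with $u_l:=u_{n(l)}(m^M_l,\cdot)$, $u_{1,l}:=u_{n(l)}((m^M_l)',\cdot)$ satisfying $\alpha(l):=\|u_l-m^M_l\|_C=o(l^{-1})$, $\gamma(l):=\|u_{1,l}-(m^M_l)'\|_C=o(1)$,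 $u_l(\pi)\ne0$; $l_0$ is fixed with $\inf_{l\ge l_0}|u_l(0)|>0$ and $l\ge l_0$. $\mu(l):=l\alpha(l)+\gamma(l)$. $m_l(\omega):=(\cos\frac\omega2)^{2l}u_l(\omega)/u_l(0)$, $\widehat{\varphi_l}(\omega):=\prod_{j\ge1}m_l(\omega2^{-j})$. *)

theory Defs
  imports "HOL-Analysis.Analysis" "HOL-Library.Landau_Symbols"
begin

definition phiM_hat :: "(real \<Rightarrow> real) \<Rightarrow> real \<Rightarrow> real \<Rightarrow> real" where
  "phiM_hat \<theta> \<omega>0 \<omega> =
     (if \<bar>\<omega>\<bar> \<le> 2 * \<omega>0 then 1
      else if \<bar>\<omega>\<bar> \<le> 2 * pi - 2 * \<omega>0
        then cos (pi / 4 + \<theta> (pi / (3 * (pi - 2 * \<omega>0)) * (\<bar>\<omega>\<bar> - pi)))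
      else 0)"

definition red2pi :: "real \<Rightarrow> real" where
  "red2pi \<omega> = \<omega> - 2 * pi * of_int \<lfloor>(\<omega> + pi) / (2 * pi)\<rfloor>"

definition mM :: "(real \<Rightarrow> real) \<Rightarrow> real \<Rightarrow> real \<Rightarrow> real" where
  "mM \<theta> \<omega>0 \<omega> = phiM_hat \<theta> \<omega>0 (2 * red2pi \<omega>)"

definition mMl :: "(real \<Rightarrow> real) \<Rightarrow> real \<Rightarrow> nat \<Rightarrow> real \<Rightarrow> real" where
  "mMl \<theta> \<omega>0 l \<omega> = mM \<theta> \<omega>0 \<omega> / (cos (\<omega> / 2)) ^ (2 * l)"

definition four_a :: "(real \<Rightarrow> real) \<Rightarrow> nat \<Rightarrow> real" where
  "four_a f k = (1 / pi) * integral {-pi..pi} (\<lambda>t. f t * cos (real k * t))"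

definition four_b :: "(real \<Rightarrow> real) \<Rightarrow> nat \<Rightarrow> real" where
  "four_b f k = (1 / pi) * integral {-pi..pi} (\<lambda>t. f t * sin (real k * t))"

definition summ :: "(nat \<Rightarrow> nat \<Rightarrow> real) \<Rightarrow> nat \<Rightarrow> (real \<Rightarrow> real) \<Rightarrow> real \<Rightarrow> real" where
  "summ lam n f \<omega> = four_a f 0 / 2 +
     (\<Sum>k=1..n. lam n k * (four_a f k * cos (real k * \<omega>) + four_b f k * sin (real k * \<omega>)))"

definition supnorm :: "real set \<Rightarrow> (real \<Rightarrow> real) \<Rightarrow> real" where
  "supnorm S g = Sup ((\<lambda>x. \<bar>g x\<bar>) ` S)"

definition ul where
  "ul \<theta> \<omega>0 lam nseq l = summ lam (nseq l) (mMl \<theta> \<omega>0 l)"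

definition u1l where
  "u1l \<theta> \<omega>0 lam nseq l = summ lam (nseq l) (deriv (mMl \<theta> \<omega>0 l))"

definition alpha where
  "alpha \<theta> \<omega>0 lam nseq l = supnorm {-pi..pi} (\<lambda>\<omega>. ul \<theta> \<omega>0 lam nseq l \<omega> - mMl \<theta> \<omega>0 l \<omega>)"

definition gamma where
  "gamma \<theta> \<omega>0 lam nseq l = supnorm {-pi..pi} (\<lambda>\<omega>. u1l \<theta> \<omega>0 lam nseq l \<omega> - deriv (mMl \<theta> \<omega>0 l) \<omega>)"

definition mu where
  "mu \<theta> \<omega>0 lam nseq l = real l * alpha \<theta> \<omega>0 lam nseq l + gamma \<theta> \<omega>0 lam nseq l"

definition ml where
  "ml \<theta> \<omega>0 lam nseq l \<omega> = (cos (\<omega> / 2)) ^ (2 * l) * ul \<theta> \<omega>0 lam nseq l \<omega> / ul \<theta> \<omega>0 lam nseq l 0"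

definition phil_hat where
  "phil_hat \<theta> \<omega>0 lam nseq l \<omega> = (\<Prod>j. ml \<theta> \<omega>0 lam nseq l (\<omega> / 2 ^ Suc j))"

end

theory Submission
  imports Defs
begin


lemma deriv_local:
  assumes "(f has_real_derivative D) (at x)" "open S" "x \<in> S" "\<And>y. y \<in> S \<Longrightarrow> f y = g y" "D = D'"
  shows "(g has_real_derivative D') (at x)"
  using has_field_derivative_transform_within_open[OF assms(1-4)] assms(5) by simp

locale meyer =
  fixes \<theta> :: "real \<Rightarrow> real" and \<omega>0 :: real
  assumes odd: "\<And>x. \<theta> (- x) = - \<theta> x"
    and dth: "\<And>x. \<theta> differentiable at x"
    and ddth: "\<And>x. deriv \<theta> differentiable at x"
    and flat: "\<And>x. x > pi / 3 \<Longrightarrow> \<theta> x = pi / 4"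
    and w0: "pi / 3 \<le> \<omega>0" "\<omega>0 < pi / 2"
begin

lemma w0pos: "\<omega>0 > 0" using w0 pi_gt_zero by linarith

lemma th_der: "(\<theta> has_real_derivative deriv \<theta> x) (at x)"
  using dth DERIV_deriv_iff_real_differentiable by blast

lemma th_chain: "(f has_real_derivative f') (at x within S) \<Longrightarrow>
   ((\<lambda>x. \<theta> (f x)) has_real_derivative deriv \<theta> (f x) * f') (at x within S)"
  by (rule DERIV_chain2[OF th_der])

lemma th_cont: "isCont \<theta> x"
  using dth differentiable_imp_continuous_within by blast

lemma th_hi: assumes "x \<ge> pi/3" shows "\<theta> x = pi/4"
proof (cases "x > pi/3")
  case True then show ?thesis using flat by auto
next
  case False
  then have x: "x = pi/3" using assms by auto
  have "(\<theta> \<longlongrightarrow> \<theta> x) (at_right x)"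
    using th_cont[of x] unfolding isCont_def by (rule filterlim_mono) (simp_all add: at_within_le_at)
  moreover have "(\<theta> \<longlongrightarrow> pi/4) (at_right x)"
  proof (rule Lim_transform_eventually[OF tendsto_const])
    show "\<forall>\<^sub>F y in at_right x. pi / 4 = \<theta> y"
      using eventually_at_right_less[of x] by (rule eventually_mono) (use flat x in auto)
  qed
  ultimately show ?thesis by (rule tendsto_unique[OF trivial_limit_at_right_real])
qed

lemma th_lo: assumes "x \<le> -pi/3" shows "\<theta> x = -pi/4"
proof -
  have "\<theta> (-x) = pi/4" using assms by (intro th_hi) simp
  then show ?thesis using odd[of x] by simp
qed

lemma dth_cont: "isCont (deriv \<theta>) x"
  using ddth differentiable_imp_continuous_within by blast

lemma dth_zero: assumes "\<bar>t\<bar> > pi/3" shows "deriv \<theta> t = 0"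
proof -
  have "(\<theta> has_real_derivative 0) (at t)"
  proof (cases "t > pi/3")
    case True
    show ?thesis
    proof (rule deriv_local[OF DERIV_const[of "pi/4" "at t"]])
      show "open {pi/3::real<..}" by simp
      show "t \<in> {pi/3<..}" using True by simp
      show "pi / 4 = \<theta> y" if "y \<in> {pi/3<..}" for y
        using flat[of y] that by simp
    qed simp
  next
    case False
    then have "t < -pi/3" using assms by auto
    show ?thesis
    proof (rule deriv_local[OF DERIV_const[of "-pi/4" "at t"]])
      show "open {..< -pi/3::real}" by simp
      show "t \<in> {..< -pi/3}" using \<open>t < -pi/3\<close> by simp
      show "- pi / 4 = \<theta> y" if "y \<in> {..< -pi/3}" for y
        using th_lo[of y] that by simp
    qed simp
  qed
  then show ?thesis by (rule DERIV_imp_deriv)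
qed

lemma dth_bounded: "\<exists>B. \<forall>t. \<bar>deriv \<theta> t\<bar> \<le> B"
proof -
  have "continuous_on {-pi/3..pi/3} (deriv \<theta>)"
    by (intro continuous_at_imp_continuous_on ballI dth_cont)
  then have "bounded (deriv \<theta> ` {-pi/3..pi/3})"
    by (intro compact_imp_bounded compact_continuous_image) auto
  then obtain B where B0: "\<forall>t\<in>{-pi/3..pi/3}. \<bar>deriv \<theta> t\<bar> \<le> B"
    unfolding bounded_real by auto
  then have B: "\<And>t. t \<in> {-pi/3..pi/3} \<Longrightarrow> \<bar>deriv \<theta> t\<bar> \<le> B" by blast
  have "\<bar>deriv \<theta> t\<bar> \<le> max B 0" for t
  proof (cases "\<bar>t\<bar> > pi/3")
    case True then show ?thesis using dth_zero[of t] by simp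
  next
    case False then have "t \<in> {-pi/3..pi/3}" by (auto simp: abs_le_iff)
    then show ?thesis using B[of t] by simp
  qed
  then show ?thesis by blast
qed

definition Bth where "Bth = (SOME B. \<forall>t. \<bar>deriv \<theta> t\<bar> \<le> B)"
lemma Bth: "\<bar>deriv \<theta> t\<bar> \<le> Bth"
  using someI_ex[OF dth_bounded] unfolding Bth_def by blast
lemma Bth_nonneg: "Bth \<ge> 0" using Bth[of 0] by linarith

definition kk where "kk = pi / (3 * (pi - 2*\<omega>0))"
lemma kk_pos: "kk > 0" using w0 by (simp add: kk_def)
lemma kk_id: "kk * (pi - 2*\<omega>0) = pi/3"
proof -
  have g: "b \<noteq> 0 \<Longrightarrow> a/(3*b)*b = a/3" for a b :: real by (simp add: field_simps)
  have "pi - 2*\<omega>0 \<noteq> 0" using w0 by simp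
  then show ?thesis unfolding kk_def by (rule g)
qed

definition Phi where "Phi w = cos (pi/4 + \<theta> (kk * (\<bar>w\<bar> - pi)))"

lemma Phi_one: assumes "\<bar>w\<bar> \<le> 2*\<omega>0" shows "Phi w = 1"
proof -
  have "kk * (\<bar>w\<bar> - pi) = kk * (\<bar>w\<bar> - 2*\<omega>0) - pi/3" using kk_id by (simp add: algebra_simps)
  moreover have "kk * (\<bar>w\<bar> - 2*\<omega>0) \<le> 0" using kk_pos assms by (simp add: mult_nonneg_nonpos)
  ultimately have "\<theta> (kk * (\<bar>w\<bar> - pi)) = -pi/4" by (intro th_lo) auto
  then show ?thesis by (simp add: Phi_def)
qed

lemma Phi_zero: assumes "\<bar>w\<bar> \<ge> 2*pi - 2*\<omega>0" shows "Phi w = 0"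
proof -
  have "kk * (\<bar>w\<bar> - pi) = kk * (\<bar>w\<bar> - (2*pi - 2*\<omega>0)) + pi/3" using kk_id by (simp add: algebra_simps)
  moreover have "kk * (\<bar>w\<bar> - (2*pi - 2*\<omega>0)) \<ge> 0" using kk_pos assms by simp
  ultimately have "\<theta> (kk * (\<bar>w\<bar> - pi)) = pi/4" by (intro th_hi) auto
  then have e: "pi/4 + \<theta> (kk * (\<bar>w\<bar> - pi)) = pi/2" by simp
  show ?thesis unfolding Phi_def e by simp
qed

lemma phiM_eq: "phiM_hat \<theta> \<omega>0 w = Phi w"
proof -
  have k: "pi / (3 * (pi - 2 * \<omega>0)) = kk" by (simp add: kk_def)
  show ?thesis
    using Phi_one[of w] Phi_zero[of w] unfolding phiM_hat_def k by (auto simp: Phi_def)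
qed

lemma Phi_bound: "\<bar>Phi w\<bar> \<le> 1" by (simp add: Phi_def)

definition dPhi where "dPhi w = (if \<bar>w\<bar> < 2*\<omega>0 then 0 else
   - sin (pi/4 + \<theta> (kk * (\<bar>w\<bar> - pi))) * (deriv \<theta> (kk * (\<bar>w\<bar> - pi)) * (kk * sgn w)))"

lemma Phi_deriv: "(Phi has_real_derivative dPhi w) (at w)"
proof -
  consider "\<bar>w\<bar> < 2*\<omega>0" | "\<bar>w\<bar> \<ge> 2*\<omega>0" "w > 0" | "\<bar>w\<bar> \<ge> 2*\<omega>0" "w < 0"
    using w0pos by force
  then show ?thesis
  proof cases
    case 1
    have "dPhi w = 0" using 1 by (simp add: dPhi_def)
    moreover have "(Phi has_real_derivative 0) (at w)"
    proof (rule has_field_derivative_transform_within_open[of "\<lambda>_. 1" 0 w "ball 0 (2*\<omega>0)"])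
      show "w \<in> ball 0 (2*\<omega>0)" using 1 by simp
      show "\<And>x. x \<in> ball 0 (2 * \<omega>0) \<Longrightarrow> 1 = Phi x" by (simp add: Phi_one)
    qed simp_all
    ultimately show ?thesis by simp
  next
    case 2
    have i: "((\<lambda>z. kk * (z - pi)) has_real_derivative kk) (at w)"
    proof -
      have "((\<lambda>z. kk * (z - pi)) has_real_derivative kk * (1 - 0)) (at w)"
        by (intro DERIV_cmult DERIV_diff DERIV_ident DERIV_const)
      then show ?thesis by simp
    qed
    have "((\<lambda>v. cos (pi/4 + \<theta> (kk * (v - pi)))) has_real_derivative
       - sin (pi/4 + \<theta> (kk * (w - pi))) * (0 + deriv \<theta> (kk * (w - pi)) * kk)) (at w)"
      by (rule DERIV_fun_cos[OF DERIV_add[OF DERIV_const th_chain[OF i]]])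
    then show ?thesis
    proof (rule deriv_local)
      show "open {(0::real)<..}" by simp
      show "w \<in> {0<..}" using 2 by simp
      show "\<And>y. y \<in> {0<..} \<Longrightarrow> cos (pi/4 + \<theta> (kk * (y - pi))) = Phi y" by (simp add: Phi_def)
      show "- sin (pi/4 + \<theta> (kk * (w - pi))) * (0 + deriv \<theta> (kk * (w - pi)) * kk) = dPhi w"
        using 2 by (simp add: dPhi_def)
    qed
  next
    case 3
    have i: "((\<lambda>z. kk * (- z - pi)) has_real_derivative kk * (-1)) (at w)"
    proof -
      have "((\<lambda>z. kk * (- z - pi)) has_real_derivative kk * (- 1 - 0)) (at w)"
        by (intro DERIV_cmult DERIV_diff DERIV_minus DERIV_ident DERIV_const)
      then show ?thesis by simp
    qed
    have "((\<lambda>v. cos (pi/4 + \<theta> (kk * (- v - pi)))) has_real_derivative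
       - sin (pi/4 + \<theta> (kk * (- w - pi))) * (0 + deriv \<theta> (kk * (- w - pi)) * (kk * (-1)))) (at w)"
      by (rule DERIV_fun_cos[OF DERIV_add[OF DERIV_const th_chain[OF i]]])
    then show ?thesis
    proof (rule deriv_local)
      show "open {..<(0::real)}" by simp
      show "w \<in> {..<0}" using 3 by simp
      show "\<And>y. y \<in> {..<0} \<Longrightarrow> cos (pi/4 + \<theta> (kk * (- y - pi))) = Phi y" by (simp add: Phi_def)
      show "- sin (pi/4 + \<theta> (kk * (- w - pi))) * (0 + deriv \<theta> (kk * (- w - pi)) * (kk * (-1))) = dPhi w"
        using 3 by (simp add: dPhi_def)
    qed
  qed
qed

lemma dPhi_bound: "\<bar>dPhi w\<bar> \<le> kk * Bth"
proof -
  have "\<bar>sin (pi/4 + \<theta> (kk * (\<bar>w\<bar> - pi))) * (deriv \<theta> (kk * (\<bar>w\<bar> - pi)) * (kk * sgn w))\<bar>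
     \<le> 1 * (Bth * (kk * 1))"
  proof -
    have s: "\<bar>sin (pi/4 + \<theta> (kk * (\<bar>w\<bar> - pi)))\<bar> \<le> 1" by simp
    have c: "\<bar>kk * sgn w\<bar> \<le> kk * 1" using kk_pos by (simp add: abs_mult abs_sgn_eq)
    have d: "\<bar>deriv \<theta> (kk * (\<bar>w\<bar> - pi))\<bar> \<le> Bth" by (rule Bth)
    have "\<bar>deriv \<theta> (kk * (\<bar>w\<bar> - pi))\<bar> * \<bar>kk * sgn w\<bar> \<le> Bth * (kk * 1)"
      by (rule mult_mono[OF d c]) (use Bth_nonneg in auto)
    then show ?thesis unfolding abs_mult
      by (rule mult_mono[OF s]) (use Bth_nonneg kk_pos in auto)
  qed
  then show ?thesis using kk_pos Bth_nonneg by (simp add: dPhi_def mult_ac)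
qed

end

context meyer begin

definition jx :: "real \<Rightarrow> int" where "jx x = \<lfloor>(x + pi)/(2*pi)\<rfloor>"

lemma red2pi_eq: "red2pi x = x - 2*pi* of_int (jx x)" by (simp add: red2pi_def jx_def)

lemma jx_bounds: "-pi \<le> x - 2*pi* of_int (jx x)" "x - 2*pi* of_int (jx x) < pi"
proof -
  have a: "of_int (jx x) \<le> (x+pi)/(2*pi)" unfolding jx_def by (rule of_int_floor_le)
  have b: "(x+pi)/(2*pi) < of_int (jx x) + 1" unfolding jx_def by (rule real_of_int_floor_add_one_gt)
  from a have "of_int (jx x) * (2*pi) \<le> x + pi" by (simp add: pos_le_divide_eq)
  then show "-pi \<le> x - 2*pi* of_int (jx x)" by (simp add: algebra_simps)
  from b have "x + pi < (of_int (jx x) + 1) * (2*pi)" by (simp add: pos_divide_less_eq)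
  then show "x - 2*pi* of_int (jx x) < pi" by (simp add: algebra_simps)
qed

lemma int_abs_ge1: "(k::int) \<noteq> 0 \<Longrightarrow> \<bar>real_of_int k\<bar> \<ge> 1"
proof -
  assume "k \<noteq> 0"
  then have "1 \<le> \<bar>k\<bar>" by linarith
  then show ?thesis by (metis of_int_abs of_int_1_le_iff)
qed

lemma mM_loc:
  assumes "\<bar>y - 2*pi* of_int j\<bar> < pi + \<omega>0"
  shows "mM \<theta> \<omega>0 y = Phi (2*(y - 2*pi* of_int j))"
proof -
  have m: "mM \<theta> \<omega>0 y = Phi (2*(y - 2*pi* of_int (jx y)))"
    by (simp add: mM_def phiM_eq red2pi_eq)
  show ?thesis
  proof (cases "j = jx y")
    case True then show ?thesis using m by simp
  next
    case False
    define d where "d = y - 2*pi* of_int (jx y)"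
    define e where "e = y - 2*pi* of_int j"
    have d1: "\<bar>d\<bar> \<le> pi" using jx_bounds[of y] by (simp add: d_def)
    have e1: "\<bar>e\<bar> < pi + \<omega>0" using assms by (simp add: e_def)
    have ed: "e - d = 2*pi* of_int (jx y - j)" by (simp add: d_def e_def algebra_simps)
    have "\<bar>real_of_int (jx y - j)\<bar> \<ge> 1" using False by (intro int_abs_ge1) simp
    then have "\<bar>e - d\<bar> \<ge> 2*pi" unfolding ed abs_mult by simp
    then have "\<bar>e\<bar> \<ge> pi" "\<bar>d\<bar> > pi - \<omega>0" using d1 e1 by linarith+
    then have "Phi (2*e) = 0" "Phi (2*d) = 0" using w0pos by (auto intro!: Phi_zero simp: abs_mult)
    then show ?thesis using m by (simp add: d_def e_def)
  qed
qed

definition dM where "dM x = 2 * dPhi (2*(x - 2*pi* of_int (jx x)))"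

lemma mM_deriv: "(mM \<theta> \<omega>0 has_real_derivative dM x) (at x)"
proof -
  define c where "c = 2*pi* of_int (jx x)"
  have i: "((\<lambda>y. 2*(y - c)) has_real_derivative 2*(1-0)) (at x)"
    by (intro DERIV_cmult DERIV_diff DERIV_ident DERIV_const)
  have "((\<lambda>y. Phi (2*(y - c))) has_real_derivative dPhi (2*(x - c)) * (2*(1-0))) (at x)"
    by (rule DERIV_chain2[OF Phi_deriv i])
  then show ?thesis
  proof (rule deriv_local)
    show "open (ball c (pi + \<omega>0))" by simp
    show "x \<in> ball c (pi + \<omega>0)" using jx_bounds[of x] w0pos by (simp add: c_def dist_real_def abs_le_iff)
    show "Phi (2*(y - c)) = mM \<theta> \<omega>0 y" if "y \<in> ball c (pi + \<omega>0)" for y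
      using that mM_loc[of y "jx x"] by (simp add: c_def dist_real_def abs_minus_commute)
    show "dPhi (2 * (x - c)) * (2 * (1 - 0)) = dM x" by (simp add: dM_def c_def)
  qed
qed

lemma dM_bound: "\<bar>dM x\<bar> \<le> 2*kk*Bth"
  using dPhi_bound[of "2*(x - 2*pi* of_int (jx x))"] by (simp add: dM_def abs_mult)

lemma mM_bound: "\<bar>mM \<theta> \<omega>0 x\<bar> \<le> 1"
  by (simp add: mM_def phiM_eq Phi_bound)

lemma mM_one: "\<bar>x\<bar> \<le> \<omega>0 \<Longrightarrow> mM \<theta> \<omega>0 x = 1"
proof -
  assume a: "\<bar>x\<bar> \<le> \<omega>0"
  then have "\<bar>x\<bar> < pi + \<omega>0" using pi_gt_zero by linarith
  then have "\<bar>x - 2*pi * of_int 0\<bar> < pi + \<omega>0" by simp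
  from mM_loc[OF this] have "mM \<theta> \<omega>0 x = Phi (2*x)" by simp
  also have "\<dots> = 1" using a by (intro Phi_one) (simp add: abs_mult)
  finally show ?thesis .
qed

lemma jx_zero: "\<bar>x\<bar> < pi \<Longrightarrow> jx x = 0"
  unfolding jx_def by (subst floor_eq_iff) (simp add: pos_le_divide_eq pos_divide_less_eq abs_less_iff)

lemma dM_zero: "\<bar>x\<bar> < \<omega>0 \<Longrightarrow> dM x = 0"
  using jx_zero[of x] w0 by (simp add: dM_def dPhi_def abs_mult)

lemma mM_periodic: "mM \<theta> \<omega>0 (x + 2*pi* of_int n) = mM \<theta> \<omega>0 x"
proof -
  have b: "\<bar>x - 2*pi* of_int (jx x)\<bar> < pi + \<omega>0" using jx_bounds[of x] w0pos by (simp add: abs_less_iff)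
  have "mM \<theta> \<omega>0 (x + 2*pi* of_int n) = Phi (2*((x + 2*pi* of_int n) - 2*pi* of_int (jx x + n)))"
    by (rule mM_loc) (use b in \<open>simp add: algebra_simps\<close>)
  also have "\<dots> = Phi (2*(x - 2*pi* of_int (jx x)))" by (simp add: algebra_simps)
  also have "\<dots> = mM \<theta> \<omega>0 x" using mM_loc[OF b] by simp
  finally show ?thesis .
qed

lemma mM_zero_odd: "\<bar>y - (pi + 2*pi * of_int m)\<bar> < \<omega>0 \<Longrightarrow> mM \<theta> \<omega>0 y = 0"
proof -
  assume a: "\<bar>y - (pi + 2*pi * of_int m)\<bar> < \<omega>0"
  then have b: "y - 2*pi * of_int m < pi + \<omega>0" "y - 2*pi * of_int m > pi - \<omega>0"
    unfolding abs_less_iff by linarith+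
  then have c: "\<bar>y - 2*pi * of_int m\<bar> < pi + \<omega>0" "\<bar>y - 2*pi * of_int m\<bar> > pi - \<omega>0"
    using w0 pi_gt_zero by linarith+
  then have "Phi (2*(y - 2*pi * of_int m)) = 0" by (intro Phi_zero) (simp add: abs_mult)
  then show ?thesis using mM_loc[OF c(1)] by simp
qed

lemma cos_half_zero: "cos (x/2) = 0 \<Longrightarrow> \<exists>m::int. x = pi + 2*pi* of_int m"
proof -
  assume "cos (x/2) = 0"
  then obtain i where "x/2 = of_int i * pi + pi/2" using cos_zero_iff_int2 by blast
  then have "x = pi + 2*pi* of_int i" by (simp add: field_simps)
  then show ?thesis by blast
qed

end


lemma cos_periodic_int: "cos (x + 2*pi * of_int n) = cos x"
  by (simp add: cos_add mult.assoc[symmetric] cos_int_2pin sin_int_2pin)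
lemma sin_periodic_int: "sin (x + 2*pi * of_int n) = sin x"
  by (simp add: sin_add mult.assoc[symmetric] cos_int_2pin sin_int_2pin)

definition cc :: "nat \<Rightarrow> real \<Rightarrow> real" where "cc l x = cos (x/2) ^ (2*l)"
definition dcc :: "nat \<Rightarrow> real \<Rightarrow> real" where "dcc l x = - real l * cos (x/2) ^ (2*l - 1) * sin (x/2)"

lemma cc_alt: "cc l x = ((1 + cos x)/2) ^ l"
proof -
  have "cos x = 2 * cos (x/2)^2 - 1" using cos_double_cos[of "x/2"] by simp
  then have "(1 + cos x)/2 = cos (x/2)^2" by simp
  then show ?thesis by (simp add: cc_def power_mult)
qed

lemma cc_periodic: "cc l (x + 2*pi * of_int n) = cc l x"
  by (simp add: cc_alt cos_periodic_int)

lemma cc_deriv: "(cc l has_real_derivative dcc l x) (at x)"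
proof -
  have i: "((\<lambda>x. x/2) has_real_derivative 1/2) (at x)"
    by (rule DERIV_cdivide[OF DERIV_ident])
  have "((\<lambda>x. cos (x/2) ^ (2*l)) has_real_derivative real (2*l) * cos (x/2) ^ (2*l - 1) * (- sin (x/2) * (1/2))) (at x)"
    by (rule DERIV_fun_pow[OF DERIV_fun_cos[OF i]])
  moreover have "real (2*l) * cos (x/2) ^ (2*l - 1) * (- sin (x/2) * (1/2)) = dcc l x"
    by (simp add: dcc_def)
  ultimately show ?thesis by (simp add: cc_def[abs_def])
qed

lemma cc_bound: "\<bar>cc l x\<bar> \<le> 1"
  unfolding cc_def power_abs by (rule power_le_one) auto

lemma cc_nonneg: "cc l x \<ge> 0" by (simp add: cc_def power_mult)

lemma dcc_bound: "\<bar>dcc l x\<bar> \<le> real l"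
proof -
  have "\<bar>cos (x/2) ^ (2*l - 1)\<bar> \<le> 1" unfolding power_abs by (rule power_le_one) auto
  moreover have "\<bar>sin (x/2)\<bar> \<le> 1" by simp
  ultimately have "\<bar>cos (x/2) ^ (2*l - 1) * sin (x/2)\<bar> \<le> 1 * 1"
    unfolding abs_mult by (intro mult_mono) auto
  then show ?thesis unfolding dcc_def abs_mult abs_minus_cancel
    by (simp add: mult.assoc mult_left_le)
qed

context meyer begin

lemma Phi_twoscale: "Phi w = mM \<theta> \<omega>0 (w/2) * Phi (w/2)"
proof (cases "\<bar>w/2\<bar> < pi + \<omega>0")
  case True
  have m: "mM \<theta> \<omega>0 (w/2) = Phi w" using mM_loc[of "w/2" 0] True by simp
  show ?thesis
  proof (cases "\<bar>w\<bar> < 2*pi - 2*\<omega>0")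
    case True
    then have "\<bar>w/2\<bar> \<le> 2*\<omega>0" using w0 by simp
    then show ?thesis using m Phi_one by simp
  next
    case False then show ?thesis using m Phi_zero by simp
  qed
next
  case False
  then have "Phi (w/2) = 0" "Phi w = 0" using w0 pi_gt_zero by (auto intro!: Phi_zero)
  then show ?thesis by simp
qed

lemma Phi_prod: "Phi w = (\<Prod>j<N. mM \<theta> \<omega>0 (w / 2^(Suc j))) * Phi (w / 2^N)"
proof (induction N)
  case 0 then show ?case by simp
next
  case (Suc N)
  have "Phi (w / 2^N) = mM \<theta> \<omega>0 (w / 2^(Suc N)) * Phi (w / 2^(Suc N))"
    using Phi_twoscale[of "w/2^N"] by (simp add: field_simps)
  then show ?case using Suc by (simp add: mult_ac)
qed

lemma mM_cc: "cc l x * mMl \<theta> \<omega>0 l x = mM \<theta> \<omega>0 x"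
proof (cases "cc l x = 0")
  case True
  then have "cos (x/2) = 0" by (simp add: cc_def)
  then obtain m where "x = pi + 2*pi * of_int m" using cos_half_zero by blast
  then have "mM \<theta> \<omega>0 x = 0" using mM_zero_odd[of x m] w0pos by simp
  then show ?thesis using True by simp
next
  case False then show ?thesis by (simp add: mMl_def cc_def)
qed

lemma mMl_periodic: "mMl \<theta> \<omega>0 l (x + 2*pi * of_int n) = mMl \<theta> \<omega>0 l x"
  using cc_periodic[of l x n] mM_periodic[of x n] by (simp add: mMl_def cc_def)

lemma mMl_0: "mMl \<theta> \<omega>0 l 0 = 1"
  using mM_one[of 0] w0pos by (simp add: mMl_def)

definition dmMl where "dmMl l x = (if cc l x = 0 then 0 else
   (dM x * cc l x - mM \<theta> \<omega>0 x * dcc l x) / (cc l x * cc l x))"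

lemma mMl_zero_near: assumes "\<bar>y - (pi + 2*pi * of_int m)\<bar> < \<omega>0" shows "mMl \<theta> \<omega>0 l y = 0"
  using mM_zero_odd[OF assms] by (simp add: mMl_def)

lemma mMl_deriv_odd: assumes "\<bar>x - (pi + 2*pi * of_int m)\<bar> < \<omega>0"
  shows "(mMl \<theta> \<omega>0 l has_real_derivative 0) (at x)"
proof (rule deriv_local[OF DERIV_const[of 0 "at x"]])
  let ?S = "ball (pi + 2*pi * of_int m) \<omega>0"
  show "open ?S" by simp
  show "x \<in> ?S" using assms by (simp add: dist_real_def abs_minus_commute)
  show "0 = mMl \<theta> \<omega>0 l y" if "y \<in> ?S" for y
    using that mMl_zero_near[of y m l] by (simp add: dist_real_def abs_minus_commute)
qed simp

lemma mMl_deriv: "(mMl \<theta> \<omega>0 l has_real_derivative dmMl l x) (at x)"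
proof (cases "cc l x = 0")
  case True
  then have "cos (x/2) = 0" by (simp add: cc_def)
  then obtain m where m: "x = pi + 2*pi * of_int m" using cos_half_zero by blast
  have "(mMl \<theta> \<omega>0 l has_real_derivative 0) (at x)"
    by (rule mMl_deriv_odd[of x m]) (use m w0pos in simp)
  then show ?thesis using True by (simp add: dmMl_def)
next
  case False
  have "((\<lambda>x. mM \<theta> \<omega>0 x / cc l x) has_real_derivative
      (dM x * cc l x - mM \<theta> \<omega>0 x * dcc l x) / (cc l x * cc l x)) (at x)"
    by (rule DERIV_divide[OF mM_deriv cc_deriv False])
  moreover have "mMl \<theta> \<omega>0 l = (\<lambda>x. mM \<theta> \<omega>0 x / cc l x)" by (rule ext) (simp add: mMl_def cc_def)
  ultimately show ?thesis using False by (simp add: dmMl_def)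
qed

lemma deriv_mMl: "deriv (mMl \<theta> \<omega>0 l) x = dmMl l x"
  by (rule DERIV_imp_deriv[OF mMl_deriv])

lemma dmMl_periodic: "dmMl l (x + 2*pi * of_int n) = dmMl l x"
proof -
  have "((\<lambda>y. mMl \<theta> \<omega>0 l (y + 2*pi * of_int n)) has_real_derivative dmMl l (x + 2*pi * of_int n)) (at x)"
    using mMl_deriv[of l "x + 2*pi * of_int n"] by (simp add: DERIV_shift)
  then have "(mMl \<theta> \<omega>0 l has_real_derivative dmMl l (x + 2*pi * of_int n)) (at x)"
    by (simp add: mMl_periodic)
  then show ?thesis using mMl_deriv[of l x] DERIV_unique by blast
qed

lemma dmMl_bound: assumes "x \<in> {-pi..pi}" shows "\<bar>dmMl l x\<bar> \<le> (2*kk*Bth + real l) * 16^l"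
proof (cases "\<bar>x\<bar> \<le> pi - \<omega>0")
  case True
  have "\<bar>x\<bar>/2 \<le> pi/3" using True w0 by simp
  then have "cos (pi/3) \<le> cos (\<bar>x\<bar>/2)" by (intro cos_monotone_0_pi_le) auto
  moreover have "cos (\<bar>x\<bar>/2) = cos (x/2)" by (cases "x \<ge> 0") simp_all
  ultimately have c: "cos (x/2) \<ge> 1/2" by (simp add: cos_60)
  have "cc l x \<ge> (1/2)^(2*l)" unfolding cc_def by (rule power_mono[OF c]) simp
  then have cl: "cc l x \<ge> 1/4^l" by (simp add: power_mult power_divide)
  then have cpos: "cc l x > 0" by (smt (verit) zero_less_divide_1_iff zero_less_power)
  have num: "\<bar>dM x * cc l x - mM \<theta> \<omega>0 x * dcc l x\<bar> \<le> 2*kk*Bth * 1 + 1 * real l"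
  proof -
    have "\<bar>dM x * cc l x\<bar> \<le> 2*kk*Bth * 1" unfolding abs_mult
      by (intro mult_mono dM_bound cc_bound) (use kk_pos Bth_nonneg in auto)
    moreover have "\<bar>mM \<theta> \<omega>0 x * dcc l x\<bar> \<le> 1 * real l" unfolding abs_mult
      by (intro mult_mono mM_bound dcc_bound) auto
    ultimately show ?thesis by linarith
  qed
  have den: "cc l x * cc l x \<ge> (1/4^l) * (1/4^l)" using cl cc_nonneg[of l x] by (intro mult_mono) auto
  have "(1/4^l) * (1/4^l) = 1/(16::real)^l" by (simp add: power_mult_distrib[symmetric])
  then have den2: "cc l x * cc l x \<ge> 1/16^l" using den by simp
  have "\<bar>dmMl l x\<bar> = \<bar>dM x * cc l x - mM \<theta> \<omega>0 x * dcc l x\<bar> / (cc l x * cc l x)"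
    using cpos by (simp add: dmMl_def abs_divide)
  also have "\<dots> \<le> (2*kk*Bth + real l) / (1/16^l)"
    by (rule frac_le) (use num den2 kk_pos Bth_nonneg in auto)
  also have "\<dots> = (2*kk*Bth + real l) * 16^l" by simp
  finally show ?thesis .
next
  case False
  then consider "x > pi - \<omega>0" | "x < -(pi - \<omega>0)" by linarith
  then have "dmMl l x = 0"
  proof cases
    case 1
    then have "\<bar>x - (pi + 2*pi * of_int 0)\<bar> < \<omega>0" using assms w0pos by auto
    from mMl_deriv_odd[OF this] show ?thesis using mMl_deriv DERIV_unique by blast
  next
    case 2
    then have "\<bar>x - (pi + 2*pi * of_int (-1))\<bar> < \<omega>0" using assms w0pos by auto
    from mMl_deriv_odd[OF this] show ?thesis using mMl_deriv DERIV_unique by blast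
  qed
  then show ?thesis using kk_pos Bth_nonneg by simp
qed

end


lemma ftc_real:
  assumes "\<And>x. (h has_real_derivative h' x) (at x)"
  shows "(h' has_integral (h pi - h (-pi))) {-pi..pi}"
proof (rule fundamental_theorem_of_calculus)
  show "-pi \<le> pi" by simp
  fix x assume "x \<in> {-pi..pi}"
  show "(h has_vector_derivative h' x) (at x within {-pi..pi})"
    using assms[of x] unfolding has_real_derivative_iff_has_vector_derivative
    by (rule has_vector_derivative_at_within)
qed

lemma four_ibp:
  fixes g g' :: "real \<Rightarrow> real"
  assumes d: "\<And>x. (g has_real_derivative g' x) (at x)" and p: "g (-pi) = g pi"
  shows "four_a g' k = real k * four_b g k" "four_b g' k = - real k * four_a g k"
proof -
  have cont: "continuous_on {-pi..pi} g"
    by (intro continuous_at_imp_continuous_on ballI DERIV_isCont[OF d])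
  have ci: "(\<lambda>t. g t * cos (real k * t)) integrable_on {-pi..pi}"
    by (intro integrable_continuous_interval continuous_intros cont)
  have si: "(\<lambda>t. g t * sin (real k * t)) integrable_on {-pi..pi}"
    by (intro integrable_continuous_interval continuous_intros cont)
  have ik: "((\<lambda>x. real k * x) has_real_derivative real k * 1) (at x)" for x
    by (intro DERIV_cmult DERIV_ident)
  have h1: "((\<lambda>t. g t * cos (real k * t)) has_real_derivative
      g' x * cos (real k * x) + (- sin (real k * x) * (real k * 1)) * g x) (at x)" for x
    by (rule DERIV_mult[OF d DERIV_fun_cos[OF ik]])
  have "((\<lambda>x. g' x * cos (real k * x) + (- sin (real k * x) * (real k * 1)) * g x) has_integral
     (g pi * cos (real k * pi) - g (-pi) * cos (real k * (-pi)))) {-pi..pi}"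
    using ftc_real[OF h1] by simp
  then have A: "((\<lambda>x. g' x * cos (real k * x) - real k * (g x * sin (real k * x))) has_integral 0) {-pi..pi}"
    using p by (simp add: algebra_simps)
  have B: "((\<lambda>x. real k * (g x * sin (real k * x))) has_integral
     real k * integral {-pi..pi} (\<lambda>t. g t * sin (real k * t))) {-pi..pi}"
    by (intro has_integral_mult_right integrable_integral si)
  have "((\<lambda>x. g' x * cos (real k * x)) has_integral
      0 + real k * integral {-pi..pi} (\<lambda>t. g t * sin (real k * t))) {-pi..pi}"
    using has_integral_add[OF A B] by simp
  then show "four_a g' k = real k * four_b g k"
    unfolding four_a_def four_b_def by (simp add: integral_unique)
  have h2: "((\<lambda>t. g t * sin (real k * t)) has_real_derivative
      g' x * sin (real k * x) + (cos (real k * x) * (real k * 1)) * g x) (at x)" for x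
    by (rule DERIV_mult[OF d DERIV_fun_sin[OF ik]])
  have sk: "sin (real k * pi) = 0" by (rule sin_npi)
  have "((\<lambda>x. g' x * sin (real k * x) + (cos (real k * x) * (real k * 1)) * g x) has_integral
     (g pi * sin (real k * pi) - g (-pi) * sin (real k * (-pi)))) {-pi..pi}"
    using ftc_real[OF h2] by simp
  then have C: "((\<lambda>x. g' x * sin (real k * x) + real k * (g x * cos (real k * x))) has_integral 0) {-pi..pi}"
    using p sk by (simp add: algebra_simps)
  have D: "((\<lambda>x. real k * (g x * cos (real k * x))) has_integral
     real k * integral {-pi..pi} (\<lambda>t. g t * cos (real k * t))) {-pi..pi}"
    by (intro has_integral_mult_right integrable_integral ci)
  have "((\<lambda>x. g' x * sin (real k * x)) has_integral
      0 - real k * integral {-pi..pi} (\<lambda>t. g t * cos (real k * t))) {-pi..pi}"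
    using has_integral_diff[OF C D] by simp
  then show "four_b g' k = - real k * four_a g k"
    unfolding four_a_def four_b_def by (simp add: integral_unique)
qed

lemma summ_deriv:
  fixes g g' :: "real \<Rightarrow> real"
  assumes d: "\<And>x. (g has_real_derivative g' x) (at x)" and p: "g (-pi) = g pi"
  shows "(summ lam n g has_real_derivative summ lam n g' x) (at x)"
proof -
  have ik: "((\<lambda>x. real k * x) has_real_derivative real k * 1) (at x)" for k
    by (intro DERIV_cmult DERIV_ident)
  have t: "((\<lambda>x. lam n k * (four_a g k * cos (real k * x) + four_b g k * sin (real k * x)))
     has_real_derivative lam n k * (four_a g k * (- sin (real k * x) * (real k * 1)) +
        four_b g k * (cos (real k * x) * (real k * 1)))) (at x)" for k
    by (intro DERIV_cmult DERIV_add DERIV_fun_cos DERIV_fun_sin ik)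
  have "(summ lam n g has_real_derivative 0 + (\<Sum>k=1..n. lam n k * (four_a g k * (- sin (real k * x) * (real k * 1)) +
        four_b g k * (cos (real k * x) * (real k * 1))))) (at x)"
    unfolding summ_def[abs_def] by (intro DERIV_add DERIV_const DERIV_sum t)
  moreover have "0 + (\<Sum>k=1..n. lam n k * (four_a g k * (- sin (real k * x) * (real k * 1)) +
        four_b g k * (cos (real k * x) * (real k * 1)))) = summ lam n g' x"
    unfolding summ_def four_ibp[OF d p]
    by (intro arg_cong2[where f="(+)"] sum.cong refl) (simp_all add: algebra_simps)
  ultimately show ?thesis by simp
qed

lemma summ_periodic: "summ lam n f (x + 2*pi * of_int m) = summ lam n f x"
proof -
  have e: "real k * (x + 2*pi * of_int m) = real k * x + 2*pi * of_int (int k * m)" for k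
    by (simp add: algebra_simps)
  have c: "cos (real k * (x + 2*pi * of_int m)) = cos (real k * x)" for k
    unfolding e by (rule cos_periodic_int)
  have s: "sin (real k * (x + 2*pi * of_int m)) = sin (real k * x)" for k
    unfolding e by (rule sin_periodic_int)
  show ?thesis unfolding summ_def c s ..
qed

lemma summ_cont: "continuous_on S (summ lam n f)"
  unfolding summ_def[abs_def] by (intro continuous_intros)



lemma supnorm_ge:
  assumes "\<And>x. x \<in> S \<Longrightarrow> \<bar>f x\<bar> \<le> B" "x \<in> S"
  shows "\<bar>f x\<bar> \<le> supnorm S f"
  unfolding supnorm_def
  by (rule cSup_upper) (use assms in \<open>auto intro!: bdd_aboveI2\<close>)

lemma supnorm_nonneg:
  assumes "\<And>x. x \<in> S \<Longrightarrow> \<bar>f x\<bar> \<le> B" "x \<in> S"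
  shows "0 \<le> supnorm S f"
proof -
  have "\<bar>f x\<bar> \<le> supnorm S f" by (rule supnorm_ge[where B=B]) (use assms in auto)
  then show ?thesis by linarith
qed

lemma supnorm_le:
  assumes "\<And>x. x \<in> S \<Longrightarrow> \<bar>f x\<bar> \<le> B" "S \<noteq> {}"
  shows "supnorm S f \<le> B"
  unfolding supnorm_def by (rule cSup_least) (use assms in auto)

lemma cont_bounded:
  assumes "continuous_on {a..b} (f :: real \<Rightarrow> real)"
  shows "\<exists>B. \<forall>x\<in>{a..b}. \<bar>f x\<bar> \<le> B"
proof -
  have "bounded (f ` {a..b})"
    by (intro compact_imp_bounded compact_continuous_image assms) auto
  then show ?thesis unfolding bounded_real by auto
qed

locale meyer2 = meyer +
  fixes lam :: "nat \<Rightarrow> nat \<Rightarrow> real" and nseq :: "nat \<Rightarrow> nat"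
begin

abbreviation "U l \<equiv> ul \<theta> \<omega>0 lam nseq l"
abbreviation "U1 l \<equiv> u1l \<theta> \<omega>0 lam nseq l"
abbreviation "al l \<equiv> alpha \<theta> \<omega>0 lam nseq l"
abbreviation "ga l \<equiv> gamma \<theta> \<omega>0 lam nseq l"
abbreviation "KM \<equiv> 2*kk*Bth"

lemma KM_nonneg: "KM \<ge> 0" using kk_pos Bth_nonneg by simp

lemma U1_eq: "U1 l = summ lam (nseq l) (dmMl l)"
proof -
  have "deriv (mMl \<theta> \<omega>0 l) = dmMl l" by (rule ext) (rule deriv_mMl)
  then show ?thesis by (simp add: u1l_def)
qed

lemma mMl_pi: "mMl \<theta> \<omega>0 l (-pi) = mMl \<theta> \<omega>0 l pi"
  using mMl_periodic[of l "-pi" 1] by simp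

lemma U_deriv: "(U l has_real_derivative U1 l x) (at x)"
  unfolding ul_def U1_eq by (rule summ_deriv[OF mMl_deriv mMl_pi])

lemma mMl_cont: "continuous_on S (mMl \<theta> \<omega>0 l)"
  by (intro continuous_at_imp_continuous_on ballI DERIV_isCont[OF mMl_deriv])

lemma red_ex: "\<exists>y n. y \<in> {-pi..pi} \<and> x = y + 2*pi * of_int n"
  using jx_bounds[of x] by (intro exI[of _ "x - 2*pi * of_int (jx x)"] exI[of _ "jx x"]) auto

lemma U_close: "\<bar>U l x - mMl \<theta> \<omega>0 l x\<bar> \<le> al l"
proof -
  obtain y n where y: "y \<in> {-pi..pi}" "x = y + 2*pi * of_int n" using red_ex by blast
  have "continuous_on {-pi..pi} (\<lambda>x. U l x - mMl \<theta> \<omega>0 l x)"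
    unfolding ul_def by (intro continuous_intros summ_cont mMl_cont)
  then obtain B where B: "\<forall>x\<in>{-pi..pi}. \<bar>U l x - mMl \<theta> \<omega>0 l x\<bar> \<le> B" using cont_bounded by blast
  have "\<bar>U l y - mMl \<theta> \<omega>0 l y\<bar> \<le> al l"
    unfolding alpha_def by (rule supnorm_ge[OF _ y(1)]) (use B in auto)
  then show ?thesis using y(2) by (simp add: ul_def summ_periodic mMl_periodic)
qed

lemma al_nonneg: "al l \<ge> 0" using U_close[of l 0] by linarith

lemma U1_close: "\<bar>U1 l x - dmMl l x\<bar> \<le> ga l"
proof -
  obtain y n where y: "y \<in> {-pi..pi}" "x = y + 2*pi * of_int n" using red_ex by blast
  have "continuous_on {-pi..pi} (U1 l)"
    unfolding U1_eq by (rule summ_cont)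
  then obtain B where B: "\<forall>x\<in>{-pi..pi}. \<bar>U1 l x\<bar> \<le> B" using cont_bounded by blast
  have b: "\<bar>U1 l x - dmMl l x\<bar> \<le> B + (2*kk*Bth + real l) * 16^l" if "x \<in> {-pi..pi}" for x
  proof -
    have "\<bar>U1 l x\<bar> \<le> B" using B that by blast
    moreover have "\<bar>dmMl l x\<bar> \<le> (2*kk*Bth + real l) * 16^l" by (rule dmMl_bound[OF that])
    ultimately show ?thesis using abs_triangle_ineq4[of "U1 l x" "dmMl l x"] by linarith
  qed
  have gdef: "ga l = supnorm {-pi..pi} (\<lambda>\<omega>. U1 l \<omega> - dmMl l \<omega>)"
    unfolding gamma_def using deriv_mMl by simp
  have "\<bar>U1 l y - dmMl l y\<bar> \<le> ga l"
    unfolding gdef by (rule supnorm_ge[OF _ y(1)]) (use b in auto)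
  then show ?thesis using y(2) by (simp add: U1_eq summ_periodic dmMl_periodic)
qed

lemma ga_nonneg: "ga l \<ge> 0" using U1_close[of l 0] by linarith

definition dml where "dml l x = (dcc l x * U l x + cc l x * U1 l x) / U l 0"

lemma ml_eq: "ml \<theta> \<omega>0 lam nseq l = (\<lambda>x. cc l x * U l x / U l 0)"
  by (rule ext) (simp add: ml_def cc_def)

lemma ml_deriv: "(ml \<theta> \<omega>0 lam nseq l has_real_derivative dml l x) (at x)"
  unfolding ml_eq dml_def
  by (intro DERIV_cdivide) (rule DERIV_mult[OF cc_deriv U_deriv, THEN DERIV_cong], simp add: mult_ac)

lemma ml_0: "U l 0 \<noteq> 0 \<Longrightarrow> ml \<theta> \<omega>0 lam nseq l 0 = 1"
  by (simp add: ml_eq cc_def)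

lemma dM_split: "dM x = dcc l x * mMl \<theta> \<omega>0 l x + cc l x * dmMl l x"
proof -
  have "((\<lambda>x. cc l x * mMl \<theta> \<omega>0 l x) has_real_derivative dcc l x * mMl \<theta> \<omega>0 l x + dmMl l x * cc l x) (at x)"
    by (rule DERIV_mult[OF cc_deriv mMl_deriv])
  then have "(mM \<theta> \<omega>0 has_real_derivative dcc l x * mMl \<theta> \<omega>0 l x + dmMl l x * cc l x) (at x)"
    by (simp add: mM_cc)
  then show ?thesis using mM_deriv DERIV_unique by (metis mult.commute)
qed

definition EE where "EE d l = (real l * al l + ga l + KM * al l) / d"

lemma dml_close:
  assumes d: "d > 0" "\<bar>U l 0\<bar> \<ge> d"
  shows "\<bar>dml l x - dM x\<bar> \<le> EE d l"
proof -
  define u0 where "u0 = U l 0"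
  have u0: "u0 \<noteq> 0" "\<bar>u0\<bar> \<ge> d" using d by (auto simp: u0_def)
  have a0: "\<bar>1 - u0\<bar> \<le> al l" using U_close[of l 0] mMl_0[of l] by (simp add: u0_def abs_minus_commute)
  have eq: "dml l x - dM x = (dcc l x * (U l x - mMl \<theta> \<omega>0 l x) + cc l x * (U1 l x - dmMl l x) + dM x * (1 - u0)) / u0"
    using u0(1) unfolding dml_def dM_split[of x l] u0_def[symmetric] by (simp add: field_simps)
  have n: "\<bar>dcc l x * (U l x - mMl \<theta> \<omega>0 l x) + cc l x * (U1 l x - dmMl l x) + dM x * (1 - u0)\<bar>
      \<le> real l * al l + 1 * ga l + KM * al l"
  proof -
    have "\<bar>dcc l x * (U l x - mMl \<theta> \<omega>0 l x)\<bar> \<le> real l * al l"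
      unfolding abs_mult by (intro mult_mono dcc_bound U_close) auto
    moreover have "\<bar>cc l x * (U1 l x - dmMl l x)\<bar> \<le> 1 * ga l"
      unfolding abs_mult by (intro mult_mono cc_bound U1_close) auto
    moreover have "\<bar>dM x * (1 - u0)\<bar> \<le> KM * al l"
      unfolding abs_mult by (intro mult_mono dM_bound a0) (use KM_nonneg in auto)
    ultimately show ?thesis by linarith
  qed
  have "\<bar>dml l x - dM x\<bar> \<le> (real l * al l + 1 * ga l + KM * al l) / \<bar>u0\<bar>"
    unfolding eq abs_divide using n u0 by (intro divide_right_mono) auto
  also have "\<dots> \<le> (real l * al l + 1 * ga l + KM * al l) / d"
    using u0 d al_nonneg[of l] ga_nonneg[of l] KM_nonneg
    by (intro divide_left_mono) (auto intro!: add_nonneg_nonneg mult_nonneg_nonneg)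
  finally show ?thesis by (simp add: EE_def)
qed

lemma EE_nonneg: "d > 0 \<Longrightarrow> EE d l \<ge> 0"
  using al_nonneg[of l] ga_nonneg[of l] KM_nonneg by (auto simp: EE_def intro!: divide_nonneg_pos add_nonneg_nonneg)

lemma ml_close:
  assumes d: "d > 0" "\<bar>U l 0\<bar> \<ge> d"
  shows "\<bar>ml \<theta> \<omega>0 lam nseq l x - mM \<theta> \<omega>0 x\<bar> \<le> EE d l * \<bar>x\<bar>"
proof -
  have "norm ((\<lambda>x. ml \<theta> \<omega>0 lam nseq l x - mM \<theta> \<omega>0 x) x - (\<lambda>x. ml \<theta> \<omega>0 lam nseq l x - mM \<theta> \<omega>0 x) 0)
     \<le> EE d l * norm (x - 0)"
  proof (rule field_differentiable_bound[of UNIV])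
    show "((\<lambda>x. ml \<theta> \<omega>0 lam nseq l x - mM \<theta> \<omega>0 x) has_field_derivative dml l z - dM z) (at z within UNIV)" for z
      using DERIV_diff[OF ml_deriv mM_deriv] by simp
    show "norm (dml l z - dM z) \<le> EE d l" for z using dml_close[OF d] by simp
  qed auto
  moreover have "ml \<theta> \<omega>0 lam nseq l 0 = 1" using d by (intro ml_0) auto
  moreover have "mM \<theta> \<omega>0 0 = 1" using mM_one[of 0] w0pos by simp
  ultimately show ?thesis by simp
qed

end


lemma halfsum: "(\<lambda>n. c * (1/2::real)^Suc n) sums c"
proof -
  have "(\<lambda>n. (1/2::real)^n) sums (1/(1 - 1/2))" by (rule geometric_sums) simp
  then have "(\<lambda>n. (c/2) * (1/2::real)^n) sums ((c/2) * (1/(1 - 1/2)))" by (rule sums_mult)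
  then show ?thesis by simp
qed

lemma abs_ln_le: "\<bar>t::real\<bar> \<le> 1/2 \<Longrightarrow> \<bar>ln (1 + t)\<bar> \<le> 2 * \<bar>t\<bar>"
proof -
  assume a: "\<bar>t\<bar> \<le> 1/2"
  have "\<bar>ln (1 + t) - t\<bar> \<le> 2 * t^2" by (rule abs_ln_one_plus_x_minus_x_bound[OF a])
  moreover have "t^2 = \<bar>t\<bar> * \<bar>t\<bar>" by (simp add: power2_eq_square abs_mult_self_eq)
  moreover have "\<bar>t\<bar> * \<bar>t\<bar> \<le> \<bar>t\<bar> * (1/2)" using a by (intro mult_left_mono) auto
  ultimately show ?thesis by linarith
qed

lemma abs_exp_sub1: "\<bar>z::real\<bar> \<le> 1 \<Longrightarrow> \<bar>exp z - 1\<bar> \<le> 3 * \<bar>z\<bar>"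
proof -
  assume z: "\<bar>z\<bar> \<le> 1"
  have "norm (exp z - exp 0) \<le> 3 * norm (z - 0)"
  proof (rule field_differentiable_bound[where S="{-1..1}" and f=exp and f'=exp and B=3])
    show "(exp has_field_derivative exp x) (at x within {-1..1})" for x :: real
      by (rule DERIV_exp[THEN has_field_derivative_at_within])
    show "norm (exp x) \<le> 3" if "x \<in> {-1..1}" for x :: real
    proof -
      have "exp x \<le> exp 1" using that by (meson atLeastAtMost_iff exp_le_cancel_iff)
      also have "exp (1::real) \<le> 3" using exp_le by simp
      finally show ?thesis by simp
    qed
  qed (use z in auto)
  then show ?thesis by simp
qed

context meyer2 begin

lemma near0:
  assumes d: "d > 0" "\<bar>U l 0\<bar> \<ge> d" and x: "\<bar>x\<bar> < \<omega>0"
  shows "\<bar>ml \<theta> \<omega>0 lam nseq l x - 1\<bar> \<le> EE d l * \<bar>x\<bar>" "\<bar>dml l x\<bar> \<le> EE d l"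
  using ml_close[OF d, of x] dml_close[OF d, of x] mM_one[of x] dM_zero[OF x] x by auto

lemma tail_prod:
  assumes d: "d > 0" "\<bar>U l 0\<bar> \<ge> d" and E: "EE d l * \<omega>0 \<le> 1/4" and y: "y \<in> ball 0 \<omega>0"
  shows "\<exists>P'. ((\<lambda>y. \<Prod>j. ml \<theta> \<omega>0 lam nseq l (y / 2^Suc j)) has_real_derivative P') (at y)
     \<and> \<bar>P'\<bar> \<le> 4 * EE d l
     \<and> (\<lambda>j. ml \<theta> \<omega>0 lam nseq l (y / 2^Suc j)) has_prod (\<Prod>j. ml \<theta> \<omega>0 lam nseq l (y / 2^Suc j))
     \<and> \<bar>(\<Prod>j. ml \<theta> \<omega>0 lam nseq l (y / 2^Suc j))\<bar> \<le> 2
     \<and> \<bar>(\<Prod>j. ml \<theta> \<omega>0 lam nseq l (y / 2^Suc j)) - 1\<bar> \<le> 6 * EE d l * \<omega>0"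
proof -
  define g where "g = ml \<theta> \<omega>0 lam nseq l"
  define E where "E = EE d l"
  define S where "S = ball (0::real) \<omega>0"
  have E0: "E \<ge> 0" using EE_nonneg[OF d(1)] by (simp add: E_def)
  have gd: "(g has_real_derivative dml l x) (at x)" for x unfolding g_def by (rule ml_deriv)
  have sc: "\<bar>z / 2^Suc j\<bar> = \<bar>z\<bar> * (1/2)^Suc j" for z :: real and j
    by (simp add: abs_divide power_one_over)
  have hs: "(1/2::real)^Suc j \<le> 1/2" for j
  proof -
    have "(1/2::real)^j \<le> 1" by (rule power_le_one) auto
    then show ?thesis by simp
  qed
  have inS: "\<bar>z / 2^Suc j\<bar> < \<omega>0" if "z \<in> S" for z j
  proof -
    have "\<bar>z\<bar> * (1/2)^Suc j \<le> \<bar>z\<bar> * 1" using hs[of j] by (intro mult_left_mono) auto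
    moreover have "\<bar>z\<bar> < \<omega>0" using that by (simp add: S_def)
    ultimately show ?thesis using sc[of z j] by linarith
  qed
  have gclose: "\<bar>g (z / 2^Suc j) - 1\<bar> \<le> E * \<bar>z\<bar> * (1/2)^Suc j" if "z \<in> S" for z j
  proof -
    have "\<bar>g (z / 2^Suc j) - 1\<bar> \<le> E * \<bar>z / 2^Suc j\<bar>"
      using near0(1)[OF d inS[OF that, of j]] by (simp only: g_def E_def)
    then show ?thesis unfolding sc by (simp only: mult.assoc)
  qed
  have gsmall: "\<bar>g (z / 2^Suc j) - 1\<bar> \<le> 1/8" if "z \<in> S" for z j
  proof -
    have "E * \<bar>z\<bar> \<le> E * \<omega>0" using that E0 by (intro mult_left_mono) (auto simp: S_def)
    then have "E * \<bar>z\<bar> * (1/2)^Suc j \<le> (1/4) * (1/2)" using E hs[of j] E0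
      by (intro mult_mono) (auto simp: E_def)
    then show ?thesis using gclose[OF that, of j] by simp
  qed
  have gpos: "g (z / 2^Suc j) > 0" if "z \<in> S" for z j using gsmall[OF that, of j] by linarith
  define f where "f j z = ln (g (z / 2^Suc j))" for j z
  define f' where "f' j z = dml l (z / 2^Suc j) * (1 / 2^Suc j) / g (z / 2^Suc j)" for j z
  have fd: "(f j has_real_derivative f' j z) (at z)" if "z \<in> S" for j z
  proof -
    have i: "((\<lambda>z. z / 2^Suc j) has_real_derivative 1 / 2^Suc j) (at z)"
      by (rule DERIV_cdivide[OF DERIV_ident])
    have "((\<lambda>z. g (z / 2^Suc j)) has_real_derivative dml l (z / 2^Suc j) * (1 / 2^Suc j)) (at z)"
      by (rule DERIV_chain2[OF gd i])
    from DERIV_chain2[OF DERIV_ln_divide[OF gpos[OF that]] this]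
    show ?thesis by (simp add: f_def[abs_def] f'_def mult.commute)
  qed
  have f'b: "norm (f' j z) \<le> (2*E) * (1/2)^Suc j" if "z \<in> S" for j z
  proof -
    have a: "\<bar>dml l (z / 2^Suc j)\<bar> \<le> E" using near0(2)[OF d inS[OF that]] by (simp add: E_def)
    have b: "g (z / 2^Suc j) \<ge> 1/2" using gsmall[OF that, of j] by linarith
    have "\<bar>f' j z\<bar> = \<bar>dml l (z / 2^Suc j)\<bar> * (1/2)^Suc j / g (z / 2^Suc j)"
      using gpos[OF that, of j] by (simp add: f'_def abs_divide abs_mult power_one_over)
    also have "\<dots> \<le> E * (1/2)^Suc j / (1/2)"
      using a b E0 by (intro frac_le mult_right_mono) auto
    finally show ?thesis by simp
  qed
  have fb: "norm (f j z) \<le> (2*E*\<bar>z\<bar>) * (1/2)^Suc j" if "z \<in> S" for j z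
  proof -
    have "\<bar>ln (1 + (g (z / 2^Suc j) - 1))\<bar> \<le> 2 * \<bar>g (z / 2^Suc j) - 1\<bar>"
      by (rule abs_ln_le) (use gsmall[OF that, of j] in simp)
    then show ?thesis using gclose[OF that, of j] by (simp add: f_def)
  qed
  have yS: "y \<in> S" using y by (simp add: S_def)
  have g0: "g 0 = 1" unfolding g_def using ml_0[of l] d by simp
  have h1: "convex S" by (simp add: S_def)
  have h2: "(f n has_real_derivative f' n x) (at x within S)" if "x \<in> S" for n x
    using fd[OF that] by (rule has_field_derivative_at_within)
  have h3: "uniformly_convergent_on S (\<lambda>n x. \<Sum>i<n. f' i x)"
    by (rule Weierstrass_m_test'[OF f'b]) (use halfsum in \<open>auto simp: sums_iff\<close>)
  have h4: "0 \<in> S" using w0pos by (simp add: S_def)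
  have h5: "summable (\<lambda>n. f n 0)" by (simp add: f_def g0)
  have h6: "y \<in> interior S" using yS by (simp add: S_def)
  note ser = has_field_derivative_series'[OF h1 h2 h3 h4 h5 h6]
  define L where "L x = (\<Sum>n. f n x)" for x
  define L' where "L' = (\<Sum>n. f' n y)"
  have Lb: "\<bar>L z\<bar> \<le> 2*E*\<bar>z\<bar>" if "z \<in> S" for z
  proof -
    have "norm (L z) \<le> (\<Sum>n. (2*E*\<bar>z\<bar>) * (1/2)^Suc n)"
      unfolding L_def by (rule norm_suminf_le[OF fb[OF that]]) (use halfsum in \<open>simp add: sums_iff\<close>)
    also have "\<dots> = 2*E*\<bar>z\<bar>" using halfsum sums_unique by metis
    finally show ?thesis by simp
  qed
  have L'b: "\<bar>L'\<bar> \<le> 2*E"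
  proof -
    have "norm L' \<le> (\<Sum>n. (2*E) * (1/2)^Suc n)"
      unfolding L'_def by (rule norm_suminf_le[OF f'b[OF yS]]) (use halfsum in \<open>simp add: sums_iff\<close>)
    also have "\<dots> = 2*E" using halfsum sums_unique by metis
    finally show ?thesis by simp
  qed
  have hp: "(\<lambda>j. g (z / 2^Suc j)) has_prod exp (L z)" if "z \<in> S" for z
  proof -
    have sz: "summable (\<lambda>n. f n z)"
      by (rule summable_comparison_test'[where g="\<lambda>n. (2*E*\<bar>z\<bar>) * (1/2)^Suc n"])
         (use fb[OF that] halfsum in \<open>auto simp: sums_iff\<close>)
    then have "(\<lambda>n. \<Sum>i<n. f i z) \<longlonglongrightarrow> L z" unfolding L_def by (simp add: summable_LIMSEQ)
    then have "(\<lambda>n. \<Sum>i<Suc n. f i z) \<longlonglongrightarrow> L z" by (rule LIMSEQ_Suc)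
    then have "(\<lambda>n. exp (\<Sum>i<Suc n. f i z)) \<longlonglongrightarrow> exp (L z)" by (rule tendsto_exp)
    moreover have "exp (\<Sum>i<Suc n. f i z) = (\<Prod>i\<le>n. g (z / 2^Suc (i + 0)))" for n
      unfolding lessThan_Suc_atMost exp_sum[OF finite_atMost]
      using gpos[OF that] by (intro prod.cong) (auto simp: f_def)
    ultimately have "raw_has_prod (\<lambda>j. g (z / 2^Suc j)) 0 (exp (L z))"
      unfolding raw_has_prod_def by simp
    then show ?thesis unfolding has_prod_def by blast
  qed
  have Peq: "(\<Prod>j. g (z / 2^Suc j)) = exp (L z)" if "z \<in> S" for z
    using hp[OF that] has_prod_unique by metis
  have "((\<lambda>x. exp (L x)) has_real_derivative exp (L y) * L') (at y)"
    using DERIV_chain2[OF DERIV_exp ser(2)] by (simp add: L_def[abs_def] L'_def mult_ac)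
  then have D: "((\<lambda>y. \<Prod>j. g (y / 2^Suc j)) has_real_derivative exp (L y) * L') (at y)"
  proof (rule deriv_local)
    show "open S" by (simp add: S_def)
  qed (use yS Peq in auto)
  have Lyb: "\<bar>L y\<bar> \<le> 1/2"
  proof -
    have "2*E*\<bar>y\<bar> \<le> 2*E*\<omega>0" using yS E0 by (intro mult_left_mono) (auto simp: S_def)
    then show ?thesis using Lb[OF yS] E by (simp add: E_def)
  qed
  have eb: "exp (L y) \<le> 2"
  proof -
    have "exp (L y) \<le> exp 1" using Lyb by simp
    also have "exp (1::real) \<le> 3" using exp_le by simp
    finally have "exp (L y) \<le> 3" .
    have "exp (L y) \<le> exp (1/2)" using Lyb by simp
    also have "exp (1/2::real) \<le> 2"
    proof -
      have "exp (1/2::real) ^ 2 = exp 1" by (simp add: exp_of_nat_mult[symmetric] power2_eq_square exp_add[symmetric])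
      then have "exp (1/2::real) ^ 2 \<le> 2 ^ 2" using exp_le by simp
      then show ?thesis by (rule power2_le_imp_le) simp
    qed
    finally show ?thesis .
  qed
  show ?thesis
  proof (intro exI conjI)
    show "((\<lambda>y. \<Prod>j. ml \<theta> \<omega>0 lam nseq l (y / 2^Suc j)) has_real_derivative exp (L y) * L') (at y)"
      using D by (simp add: g_def)
    show "\<bar>exp (L y) * L'\<bar> \<le> 4 * EE d l"
    proof -
      have "\<bar>exp (L y) * L'\<bar> \<le> 2 * (2*E)" unfolding abs_mult using eb L'b by (intro mult_mono) auto
      then show ?thesis by (simp add: E_def)
    qed
    show "(\<lambda>j. ml \<theta> \<omega>0 lam nseq l (y / 2^Suc j)) has_prod (\<Prod>j. ml \<theta> \<omega>0 lam nseq l (y / 2^Suc j))"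
      using hp[OF yS] Peq[OF yS] by (simp add: g_def)
    show "\<bar>\<Prod>j. ml \<theta> \<omega>0 lam nseq l (y / 2^Suc j)\<bar> \<le> 2"
      using Peq[OF yS] eb by (simp add: g_def)
    show "\<bar>(\<Prod>j. ml \<theta> \<omega>0 lam nseq l (y / 2^Suc j)) - 1\<bar> \<le> 6 * EE d l * \<omega>0"
    proof -
      have "\<bar>exp (L y) - 1\<bar> \<le> 3 * \<bar>L y\<bar>" using Lyb by (intro abs_exp_sub1) simp
      also have "\<dots> \<le> 3 * (2*E*\<omega>0)"
      proof -
        have "2*E*\<bar>y\<bar> \<le> 2*E*\<omega>0" using yS E0 by (intro mult_left_mono) (auto simp: S_def)
        then show ?thesis using Lb[OF yS] by simp
      qed
      finally show ?thesis using Peq[OF yS] by (simp add: g_def E_def)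
    qed
  qed
qed

end


lemma has_prod_shift:
  fixes f :: "nat \<Rightarrow> real"
  shows "(\<lambda>i. f (i + n)) has_prod p \<Longrightarrow> f has_prod (p * (\<Prod>i<n. f i))"
proof (induction n arbitrary: p)
  case 0 then show ?case by simp
next
  case (Suc n)
  have e: "(\<lambda>i. f (i + Suc n)) = (\<lambda>i. f (Suc i + n))" by simp
  have h: "(\<lambda>i. f (Suc i + n)) has_prod p" using Suc.prems unfolding e .
  have "(\<lambda>i. f (i + n)) has_prod (p * f (0 + n))" by (rule has_prod_Suc_imp[of "\<lambda>i. f (i + n)" p, OF h])
  then have "(\<lambda>i. f (i + n)) has_prod (p * f n)" by simp
  then have "f has_prod (p * f n * (\<Prod>i<n. f i))" by (rule Suc.IH)
  then show ?case by (simp add: mult_ac)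
qed

lemma abs_mult_le: "\<bar>x\<bar> \<le> X \<Longrightarrow> \<bar>y\<bar> \<le> Y \<Longrightarrow> \<bar>x * (y::real)\<bar> \<le> X * Y"
  unfolding abs_mult by (rule mult_mono) auto

lemma fin_prod_bound:
  fixes a b a' b' :: "nat \<Rightarrow> real \<Rightarrow> real" and S :: "real set" and A e :: real
  assumes da: "\<And>j x. (a j has_real_derivative a' j x) (at x)"
      and db: "\<And>j x. (b j has_real_derivative b' j x) (at x)"
      and A: "A \<ge> 1" and e: "e \<ge> 0"
      and ba: "\<And>j x. x \<in> S \<Longrightarrow> \<bar>a j x\<bar> \<le> A" and bb: "\<And>j x. x \<in> S \<Longrightarrow> \<bar>b j x\<bar> \<le> A"
      and ba': "\<And>j x. x \<in> S \<Longrightarrow> \<bar>a' j x\<bar> \<le> A" and bb': "\<And>j x. x \<in> S \<Longrightarrow> \<bar>b' j x\<bar> \<le> A"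
      and dab: "\<And>j x. x \<in> S \<Longrightarrow> \<bar>a j x - b j x\<bar> \<le> e"
      and dab': "\<And>j x. x \<in> S \<Longrightarrow> \<bar>a' j x - b' j x\<bar> \<le> e"
  shows "\<exists>DA DB. (\<forall>x. ((\<lambda>x. \<Prod>j<N. a j x) has_real_derivative DA x) (at x))
     \<and> (\<forall>x. ((\<lambda>x. \<Prod>j<N. b j x) has_real_derivative DB x) (at x))
     \<and> (\<forall>x\<in>S. \<bar>\<Prod>j<N. a j x\<bar> \<le> A^N \<and> \<bar>\<Prod>j<N. b j x\<bar> \<le> A^N
        \<and> \<bar>DA x\<bar> \<le> N * A^N \<and> \<bar>DB x\<bar> \<le> N * A^N
        \<and> \<bar>(\<Prod>j<N. a j x) - (\<Prod>j<N. b j x)\<bar> \<le> N * A^N * e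
        \<and> \<bar>DA x - DB x\<bar> \<le> 3 * (real N)^2 * A^N * e)"
proof (induction N)
  case 0
  have d0: "((\<lambda>x. \<Prod>j<0. a j x) has_real_derivative 0) (at x)" "((\<lambda>x. \<Prod>j<0. b j x) has_real_derivative 0) (at x)" for x
    by simp_all
  show ?case
    by (rule exI[of _ "\<lambda>_. 0"], rule exI[of _ "\<lambda>_. 0"]) (use d0 in simp)
next
  case (Suc N)
  from Suc.IH obtain DA DB where
    H1: "\<forall>x. ((\<lambda>x. \<Prod>j<N. a j x) has_real_derivative DA x) (at x)" and
    H2: "\<forall>x. ((\<lambda>x. \<Prod>j<N. b j x) has_real_derivative DB x) (at x)" and
    H3: "\<forall>x\<in>S. \<bar>\<Prod>j<N. a j x\<bar> \<le> A^N \<and> \<bar>\<Prod>j<N. b j x\<bar> \<le> A^N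
        \<and> \<bar>DA x\<bar> \<le> N * A^N \<and> \<bar>DB x\<bar> \<le> N * A^N
        \<and> \<bar>(\<Prod>j<N. a j x) - (\<Prod>j<N. b j x)\<bar> \<le> N * A^N * e
        \<and> \<bar>DA x - DB x\<bar> \<le> 3 * (real N)^2 * A^N * e"
    by (elim exE conjE) (rule that)
  have dA: "((\<lambda>x. \<Prod>j<N. a j x) has_real_derivative DA x) (at x)" for x using H1 by (rule spec)
  have dB: "((\<lambda>x. \<Prod>j<N. b j x) has_real_derivative DB x) (at x)" for x using H2 by (rule spec)
  have bnd: "\<bar>\<Prod>j<N. a j x\<bar> \<le> A^N \<and> \<bar>\<Prod>j<N. b j x\<bar> \<le> A^N
        \<and> \<bar>DA x\<bar> \<le> N * A^N \<and> \<bar>DB x\<bar> \<le> N * A^N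
        \<and> \<bar>(\<Prod>j<N. a j x) - (\<Prod>j<N. b j x)\<bar> \<le> N * A^N * e
        \<and> \<bar>DA x - DB x\<bar> \<le> 3 * (real N)^2 * A^N * e" if "x \<in> S" for x using H3 that by (rule bspec)
  define DA' where "DA' x = DA x * a N x + a' N x * (\<Prod>j<N. a j x)" for x
  define DB' where "DB' x = DB x * b N x + b' N x * (\<Prod>j<N. b j x)" for x
  have dA': "((\<lambda>x. \<Prod>j<Suc N. a j x) has_real_derivative DA' x) (at x)" for x
    unfolding prod.lessThan_Suc DA'_def by (rule DERIV_mult[OF dA da])
  have dB': "((\<lambda>x. \<Prod>j<Suc N. b j x) has_real_derivative DB' x) (at x)" for x
    unfolding prod.lessThan_Suc DB'_def by (rule DERIV_mult[OF dB db])
  have AN0: "A^N \<ge> 0" using A by simp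
  have AN1: "A^N \<le> A^Suc N" using A by (intro power_increasing) auto
  have AN2: "A^Suc N = A^N * A" by (rule power_Suc2)
  have e0: "A^N * e \<le> A^Suc N * e" using AN1 e by (rule mult_right_mono)
  show ?case
  proof (intro exI conjI allI ballI)
    show "((\<lambda>x. \<Prod>j<Suc N. a j x) has_real_derivative DA' x) (at x)" for x by (rule dA')
    show "((\<lambda>x. \<Prod>j<Suc N. b j x) has_real_derivative DB' x) (at x)" for x by (rule dB')
    fix x assume x: "x \<in> S"
    note B = bnd[OF x]
    define PA where "PA = (\<Prod>j<N. a j x)"
    define PB where "PB = (\<Prod>j<N. b j x)"
    have pa: "\<bar>PA\<bar> \<le> A^N" "\<bar>PB\<bar> \<le> A^N" "\<bar>DA x\<bar> \<le> N * A^N" "\<bar>DB x\<bar> \<le> N * A^N"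
      "\<bar>PA - PB\<bar> \<le> N * A^N * e" "\<bar>DA x - DB x\<bar> \<le> 3 * (real N)^2 * A^N * e"
      using B unfolding PA_def PB_def by simp_all
    have pA: "(\<Prod>j<Suc N. a j x) = PA * a N x" by (simp add: PA_def)
    have pB: "(\<Prod>j<Suc N. b j x) = PB * b N x" by (simp add: PB_def)
    have DA'e: "DA' x = DA x * a N x + a' N x * PA" by (simp add: DA'_def PA_def)
    have DB'e: "DB' x = DB x * b N x + b' N x * PB" by (simp add: DB'_def PB_def)
    show "\<bar>\<Prod>j<Suc N. a j x\<bar> \<le> A^Suc N"
      unfolding pA AN2 by (rule abs_mult_le[OF pa(1) ba[OF x]])
    show "\<bar>\<Prod>j<Suc N. b j x\<bar> \<le> A^Suc N"
      unfolding pB AN2 by (rule abs_mult_le[OF pa(2) bb[OF x]])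
    have nn: "real (Suc N) * A^Suc N = N * A^N * A + A * A^N" unfolding AN2 by (simp add: algebra_simps)
    have t1: "\<bar>DA x * a N x\<bar> \<le> N * A^N * A" by (rule abs_mult_le[OF pa(3) ba[OF x]])
    have t2: "\<bar>a' N x * PA\<bar> \<le> A * A^N" by (rule abs_mult_le[OF ba'[OF x] pa(1)])
    show "\<bar>DA' x\<bar> \<le> real (Suc N) * A^Suc N"
      unfolding DA'e nn using t1 t2 abs_triangle_ineq[of "DA x * a N x" "a' N x * PA"] by linarith
    have t3: "\<bar>DB x * b N x\<bar> \<le> N * A^N * A" by (rule abs_mult_le[OF pa(4) bb[OF x]])
    have t4: "\<bar>b' N x * PB\<bar> \<le> A * A^N" by (rule abs_mult_le[OF bb'[OF x] pa(2)])
    show "\<bar>DB' x\<bar> \<le> real (Suc N) * A^Suc N"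
      unfolding DB'e nn using t3 t4 abs_triangle_ineq[of "DB x * b N x" "b' N x * PB"] by linarith
    have eq1: "PA * a N x - PB * b N x = PA * (a N x - b N x) + (PA - PB) * b N x" by (simp add: algebra_simps)
    have s1: "\<bar>PA * (a N x - b N x)\<bar> \<le> A^N * e" by (rule abs_mult_le[OF pa(1) dab[OF x]])
    have s2: "\<bar>(PA - PB) * b N x\<bar> \<le> (N * A^N * e) * A" by (rule abs_mult_le[OF pa(5) bb[OF x]])
    have nn2: "real (Suc N) * A^Suc N * e = A^Suc N * e + (N * A^N * e) * A" unfolding AN2 by (simp add: algebra_simps)
    show "\<bar>(\<Prod>j<Suc N. a j x) - (\<Prod>j<Suc N. b j x)\<bar> \<le> real (Suc N) * A^Suc N * e"
      unfolding pA pB eq1 nn2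
      using s1 s2 e0 abs_triangle_ineq[of "PA * (a N x - b N x)" "(PA - PB) * b N x"] by linarith
    have eq2: "DA' x - DB' x = ((DA x - DB x) * a N x + DB x * (a N x - b N x))
        + ((a' N x - b' N x) * PA + b' N x * (PA - PB))"
      unfolding DA'e DB'e by (simp add: algebra_simps)
    have r1: "\<bar>(DA x - DB x) * a N x\<bar> \<le> (3 * (real N)^2 * A^N * e) * A" by (rule abs_mult_le[OF pa(6) ba[OF x]])
    have r2: "\<bar>DB x * (a N x - b N x)\<bar> \<le> (N * A^N) * e" by (rule abs_mult_le[OF pa(4) dab[OF x]])
    have r3: "\<bar>(a' N x - b' N x) * PA\<bar> \<le> e * A^N" by (rule abs_mult_le[OF dab'[OF x] pa(1)])
    have r4: "\<bar>b' N x * (PA - PB)\<bar> \<le> A * (N * A^N * e)" by (rule abs_mult_le[OF bb'[OF x] pa(5)])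
    have q1: "(N * A^N) * e \<le> N * (A^Suc N * e)" using e0 by (simp add: mult.assoc mult_left_mono)
    have q2: "e * A^N \<le> A^Suc N * e" using e0 by (simp add: mult.commute)
    have q3: "(3 * (real N)^2 * A^N * e) * A = 3 * (real N)^2 * (A^Suc N * e)" "A * (N * A^N * e) = N * (A^Suc N * e)"
      unfolding AN2 by (simp_all add: algebra_simps)
    have q4: "3 * (real N)^2 * (A^Suc N * e) + real N * (A^Suc N * e) + A^Suc N * e + real N * (A^Suc N * e)
        \<le> 3 * real (Suc N)^2 * (A^Suc N * e)"
    proof -
      have "3 * (real N)^2 + real N + 1 + real N \<le> 3 * real (Suc N)^2" by (simp add: power2_eq_square algebra_simps)
      moreover have "A^Suc N * e \<ge> 0" using A e by simp
      ultimately have "(3 * (real N)^2 + real N + 1 + real N) * (A^Suc N * e) \<le> 3 * real (Suc N)^2 * (A^Suc N * e)"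
        by (intro mult_right_mono) auto
      then show ?thesis by (simp only: distrib_right mult_1_left)
    qed
    have q5: "3 * real (Suc N)^2 * A^Suc N * e = 3 * real (Suc N)^2 * (A^Suc N * e)" by (simp add: mult.assoc)
    show "\<bar>DA' x - DB' x\<bar> \<le> 3 * real (Suc N)^2 * A^Suc N * e"
      unfolding eq2 q5
      using r1 r2 r3 r4 q1 q2 q3 q4
        abs_triangle_ineq[of "(DA x - DB x) * a N x + DB x * (a N x - b N x)" "(a' N x - b' N x) * PA + b' N x * (PA - PB)"]
        abs_triangle_ineq[of "(DA x - DB x) * a N x" "DB x * (a N x - b N x)"]
        abs_triangle_ineq[of "(a' N x - b' N x) * PA" "b' N x * (PA - PB)"]
      by linarith
  qed
qed



context meyer2 begin

lemma main_bound:
  assumes ab: "a < b"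
  shows "\<exists>C. \<forall>l d. d > 0 \<longrightarrow> \<bar>U l 0\<bar> \<ge> d \<longrightarrow> EE d l \<le> 1 \<longrightarrow> EE d l * \<omega>0 \<le> 1/4 \<longrightarrow>
     (\<forall>x\<in>{a..b}. \<bar>deriv (phil_hat \<theta> \<omega>0 lam nseq l) x - deriv (phiM_hat \<theta> \<omega>0) x\<bar> \<le> C * EE d l)"
proof -
  define R where "R = max \<bar>a\<bar> \<bar>b\<bar> + 1"
  have R1: "R \<ge> 1" by (simp add: R_def)
  obtain N where N: "R/\<omega>0 < 2^N" using real_arch_pow[of 2 "R/\<omega>0"] by auto
  have RN: "R < 2^N * \<omega>0" using N w0pos by (simp add: divide_less_eq)
  define A where "A = max (1 + R) (KM + 1)"
  have A1: "A \<ge> 1" "A \<ge> 1 + R" "A \<ge> KM + 1" using R1 by (auto simp: A_def)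
  define C where "C = 6 * (real N)^2 * A^N * R + 6 * real N * A^N * \<omega>0 + 4 * A^N"
  show ?thesis
  proof (intro exI[of _ C] allI impI)
    fix l d assume d0: "d > 0" and dU: "\<bar>U l 0\<bar> \<ge> d" and E1: "EE d l \<le> 1" and E4: "EE d l * \<omega>0 \<le> 1/4"
    note d = d0 dU
    define E where "E = EE d l"
    have E0: "E \<ge> 0" using EE_nonneg[OF d0] by (simp add: E_def)
    define S where "S = ball (0::real) R"
    define ga where "ga j x = ml \<theta> \<omega>0 lam nseq l (x / 2^Suc j)" for j x
    define ga' where "ga' j x = dml l (x / 2^Suc j) * (1 / 2^Suc j)" for j x
    define gb where "gb j x = mM \<theta> \<omega>0 (x / 2^Suc j)" for j x
    define gb' where "gb' j x = dM (x / 2^Suc j) * (1 / 2^Suc j)" for j x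
    have idiv: "((\<lambda>x. x / 2^Suc j) has_real_derivative 1 / 2^Suc j) (at x)" for j x
      by (rule DERIV_cdivide[OF DERIV_ident])
    have da: "(ga j has_real_derivative ga' j x) (at x)" for j x
      unfolding ga_def[abs_def] ga'_def by (rule DERIV_chain2[OF ml_deriv idiv])
    have db: "(gb j has_real_derivative gb' j x) (at x)" for j x
      unfolding gb_def[abs_def] gb'_def by (rule DERIV_chain2[OF mM_deriv idiv])
    have hle: "(1/2::real)^Suc j \<le> 1" for j by (rule power_le_one) auto
    have zle: "\<bar>x / 2^Suc j\<bar> \<le> \<bar>x\<bar>" for x :: real and j
    proof -
      have "\<bar>x / 2^Suc j\<bar> = \<bar>x\<bar> * (1/2)^Suc j" by (simp add: abs_divide power_one_over)
      also have "\<dots> \<le> \<bar>x\<bar> * 1" by (intro mult_left_mono hle) auto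
      finally show ?thesis by simp
    qed
    have iv: "1 / 2^Suc j \<le> (1::real)" "0 \<le> 1 / (2::real)^Suc j" for j
    proof -
      have "(1::real) \<le> 2^Suc j" by (rule one_le_power) simp
      then show "1 / 2^Suc j \<le> (1::real)" by simp
    qed simp
    have xR: "\<bar>x / 2^Suc j\<bar> \<le> R" if "x \<in> S" for x j using zle[of x j] that by (simp add: S_def)
    have cl: "\<bar>ml \<theta> \<omega>0 lam nseq l z - mM \<theta> \<omega>0 z\<bar> \<le> E * R" if "\<bar>z\<bar> \<le> R" for z
    proof -
      have "E * \<bar>z\<bar> \<le> E * R" using that E0 by (rule mult_left_mono)
      then show ?thesis using ml_close[OF d, of z] by (simp add: E_def)
    qed
    have dcl: "\<bar>dml l z - dM z\<bar> \<le> E" for z using dml_close[OF d] by (simp add: E_def)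
    have ER: "E \<le> E * R" using E0 R1 by (simp add: mult_le_cancel_left1)
    have b_a: "\<bar>ga j x\<bar> \<le> A" if "x \<in> S" for j x
    proof -
      have "\<bar>ga j x - gb j x\<bar> \<le> E * R" unfolding ga_def gb_def by (rule cl[OF xR[OF that]])
      moreover have "\<bar>gb j x\<bar> \<le> 1" unfolding gb_def by (rule mM_bound)
      moreover have "E * R \<le> 1 * R" using E1 R1 by (intro mult_right_mono) (auto simp: E_def)
      ultimately show ?thesis using A1 by linarith
    qed
    have b_b: "\<bar>gb j x\<bar> \<le> A" for j x
    proof -
      have "\<bar>gb j x\<bar> \<le> 1" unfolding gb_def by (rule mM_bound)
      then show ?thesis using A1 by linarith
    qed
    have b_b': "\<bar>gb' j x\<bar> \<le> A" for j x
    proof -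
      have "\<bar>gb' j x\<bar> \<le> KM * 1" unfolding gb'_def by (rule abs_mult_le[OF dM_bound]) (use iv in auto)
      then show ?thesis using A1 by linarith
    qed
    have b_a': "\<bar>ga' j x\<bar> \<le> A" for j x
    proof -
      have "\<bar>dml l (x / 2^Suc j)\<bar> \<le> KM + 1"
        using dcl[of "x / 2^Suc j"] dM_bound[of "x / 2^Suc j"] E1 unfolding E_def by linarith
      then have "\<bar>ga' j x\<bar> \<le> (KM + 1) * 1" unfolding ga'_def by (rule abs_mult_le) (use iv in auto)
      then have "\<bar>ga' j x\<bar> \<le> KM + 1" by simp
      then show ?thesis using A1(3) by linarith
    qed
    have b_ab: "\<bar>ga j x - gb j x\<bar> \<le> E * R" if "x \<in> S" for j x
      unfolding ga_def gb_def by (rule cl[OF xR[OF that]])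
    have b_ab': "\<bar>ga' j x - gb' j x\<bar> \<le> E * R" for j x
    proof -
      have "ga' j x - gb' j x = (dml l (x / 2^Suc j) - dM (x / 2^Suc j)) * (1 / 2^Suc j)"
        by (simp add: ga'_def gb'_def algebra_simps)
      moreover have "\<bar>(dml l (x / 2^Suc j) - dM (x / 2^Suc j)) * (1 / 2^Suc j)\<bar> \<le> E * 1"
        by (rule abs_mult_le[OF dcl]) (use iv in auto)
      ultimately show ?thesis using ER by simp
    qed
    have ER0: "E * R \<ge> 0" using E0 R1 by simp
    have b_b2: "\<And>j x. x \<in> S \<Longrightarrow> \<bar>gb j x\<bar> \<le> A" by (rule b_b)
    have b_b2': "\<And>j x. x \<in> S \<Longrightarrow> \<bar>gb' j x\<bar> \<le> A" by (rule b_b')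
    have b_a2': "\<And>j x. x \<in> S \<Longrightarrow> \<bar>ga' j x\<bar> \<le> A" by (rule b_a')
    have b_ab2': "\<And>j x. x \<in> S \<Longrightarrow> \<bar>ga' j x - gb' j x\<bar> \<le> E * R" by (rule b_ab')
    have FP: "\<exists>DA DB. (\<forall>x. ((\<lambda>x. \<Prod>j<N. ga j x) has_real_derivative DA x) (at x))
     \<and> (\<forall>x. ((\<lambda>x. \<Prod>j<N. gb j x) has_real_derivative DB x) (at x))
     \<and> (\<forall>x\<in>S. \<bar>\<Prod>j<N. ga j x\<bar> \<le> A^N \<and> \<bar>\<Prod>j<N. gb j x\<bar> \<le> A^N
        \<and> \<bar>DA x\<bar> \<le> N * A^N \<and> \<bar>DB x\<bar> \<le> N * A^N
        \<and> \<bar>(\<Prod>j<N. ga j x) - (\<Prod>j<N. gb j x)\<bar> \<le> N * A^N * (E * R)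
        \<and> \<bar>DA x - DB x\<bar> \<le> 3 * (real N)^2 * A^N * (E * R))"
      by (rule fin_prod_bound[of ga ga' gb gb' A "E * R" S N]) (fact da db A1(1) ER0 b_a b_b2 b_a2' b_b2' b_ab b_ab2')+
    obtain DA DB where
      dA: "\<forall>x. ((\<lambda>x. \<Prod>j<N. ga j x) has_real_derivative DA x) (at x)" and
      dB: "\<forall>x. ((\<lambda>x. \<Prod>j<N. gb j x) has_real_derivative DB x) (at x)" and
      bnd: "\<forall>x\<in>S. \<bar>\<Prod>j<N. ga j x\<bar> \<le> A^N \<and> \<bar>\<Prod>j<N. gb j x\<bar> \<le> A^N
        \<and> \<bar>DA x\<bar> \<le> N * A^N \<and> \<bar>DB x\<bar> \<le> N * A^N
        \<and> \<bar>(\<Prod>j<N. ga j x) - (\<Prod>j<N. gb j x)\<bar> \<le> N * A^N * (E * R)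
        \<and> \<bar>DA x - DB x\<bar> \<le> 3 * (real N)^2 * A^N * (E * R)"
      using FP       by (elim exE conjE) (rule that)
    define P where "P y = (\<Prod>j. ml \<theta> \<omega>0 lam nseq l (y / 2^Suc j))" for y
    have yball: "x / 2^N \<in> ball 0 \<omega>0" if "x \<in> S" for x
    proof -
      have "\<bar>x\<bar> < 2^N * \<omega>0" using that RN by (simp add: S_def)
      then show ?thesis by (simp add: abs_divide divide_less_eq mult.commute)
    qed
    have TP: "\<exists>P'. (P has_real_derivative P') (at (x / 2^N)) \<and> \<bar>P'\<bar> \<le> 4 * E
       \<and> (\<lambda>j. ml \<theta> \<omega>0 lam nseq l ((x / 2^N) / 2^Suc j)) has_prod P (x / 2^N)
       \<and> \<bar>P (x / 2^N)\<bar> \<le> 2 \<and> \<bar>P (x / 2^N) - 1\<bar> \<le> 6 * E * \<omega>0" if "x \<in> S" for x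
      using tail_prod[OF d E4 yball[OF that]] unfolding P_def[abs_def] E_def by simp
    have phil_eq: "phil_hat \<theta> \<omega>0 lam nseq l x = (\<Prod>j<N. ga j x) * P (x / 2^N)" if "x \<in> S" for x
    proof -
      have hp: "(\<lambda>j. ml \<theta> \<omega>0 lam nseq l ((x / 2^N) / 2^Suc j)) has_prod P (x / 2^N)"
        using TP[OF that] by blast
      have e: "(\<lambda>i. ga (i + N) x) = (\<lambda>j. ml \<theta> \<omega>0 lam nseq l ((x / 2^N) / 2^Suc j))"
        by (rule ext) (simp add: ga_def power_add mult_ac)
      have "(\<lambda>i. ga (i + N) x) has_prod P (x / 2^N)" unfolding e by (rule hp)
      from has_prod_shift[OF this] have "(\<lambda>j. ga j x) has_prod (P (x / 2^N) * (\<Prod>i<N. ga i x))" .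
      then have "(\<Prod>j. ga j x) = P (x / 2^N) * (\<Prod>i<N. ga i x)" by (rule has_prod_unique[symmetric])
      then show ?thesis by (simp add: phil_hat_def ga_def mult.commute)
    qed
    have phiM_eq2: "phiM_hat \<theta> \<omega>0 x = (\<Prod>j<N. gb j x)" if "x \<in> S" for x
    proof -
      have "\<bar>x / 2^N\<bar> \<le> 2*\<omega>0" using yball[OF that] w0pos by simp
      then have "Phi (x / 2^N) = 1" by (rule Phi_one)
      then show ?thesis using Phi_prod[of x N] by (simp add: phiM_eq gb_def)
    qed
    have pw: "\<bar>deriv (phil_hat \<theta> \<omega>0 lam nseq l) x - deriv (phiM_hat \<theta> \<omega>0) x\<bar> \<le> C * E"
      if xab: "x \<in> {a..b}" for x
    proof -
      have xS: "x \<in> S" using xab by (auto simp: S_def R_def abs_le_iff)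
      obtain P' where P': "(P has_real_derivative P') (at (x / 2^N))" "\<bar>P'\<bar> \<le> 4 * E"
        "\<bar>P (x / 2^N)\<bar> \<le> 2" "\<bar>P (x / 2^N) - 1\<bar> \<le> 6 * E * \<omega>0"
        using TP[OF xS] by blast
      have iN: "((\<lambda>x. x / 2^N) has_real_derivative 1 / 2^N) (at x)" by (rule DERIV_cdivide[OF DERIV_ident])
      have dP: "((\<lambda>x. P (x / 2^N)) has_real_derivative P' * (1 / 2^N)) (at x)"
        by (rule DERIV_chain2[OF P'(1) iN])
      have d1: "((\<lambda>x. (\<Prod>j<N. ga j x) * P (x / 2^N)) has_real_derivative
          DA x * P (x / 2^N) + P' * (1 / 2^N) * (\<Prod>j<N. ga j x)) (at x)"
        using DERIV_mult[OF dA[rule_format] dP] by simp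
      have D1: "(phil_hat \<theta> \<omega>0 lam nseq l has_real_derivative
          DA x * P (x / 2^N) + P' * (1 / 2^N) * (\<Prod>j<N. ga j x)) (at x)"
        by (rule deriv_local[OF d1, of S]) (use xS phil_eq in \<open>auto simp: S_def\<close>)
      have D2: "(phiM_hat \<theta> \<omega>0 has_real_derivative DB x) (at x)"
        by (rule deriv_local[OF dB[rule_format], of S]) (use xS phiM_eq2 in \<open>auto simp: S_def\<close>)
      note B = bnd[rule_format, OF xS]
      have eq: "deriv (phil_hat \<theta> \<omega>0 lam nseq l) x - deriv (phiM_hat \<theta> \<omega>0) x
         = (DA x - DB x) * P (x / 2^N) + DB x * (P (x / 2^N) - 1) + (P' * (1 / 2^N)) * (\<Prod>j<N. ga j x)"
        using DERIV_imp_deriv[OF D1] DERIV_imp_deriv[OF D2] by (simp add: algebra_simps)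
      have r1: "\<bar>(DA x - DB x) * P (x / 2^N)\<bar> \<le> (3 * (real N)^2 * A^N * (E * R)) * 2"
        by (rule abs_mult_le) (use B P' in auto)
      have r2: "\<bar>DB x * (P (x / 2^N) - 1)\<bar> \<le> (N * A^N) * (6 * E * \<omega>0)"
        by (rule abs_mult_le) (use B P' in auto)
      have p2: "\<bar>P' * (1 / 2^N)\<bar> \<le> 4 * E * 1"
        by (rule abs_mult_le) (use P' in auto)
      have r3: "\<bar>(P' * (1 / 2^N)) * (\<Prod>j<N. ga j x)\<bar> \<le> (4 * E * 1) * A^N"
        by (rule abs_mult_le[OF p2]) (use B in auto)
      have "C * E = (3 * (real N)^2 * A^N * (E * R)) * 2 + (N * A^N) * (6 * E * \<omega>0) + (4 * E * 1) * A^N"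
        by (simp add: C_def algebra_simps)
      then show ?thesis unfolding eq using r1 r2 r3
        abs_triangle_ineq[of "(DA x - DB x) * P (x / 2^N) + DB x * (P (x / 2^N) - 1)" "(P' * (1 / 2^N)) * (\<Prod>j<N. ga j x)"]
        abs_triangle_ineq[of "(DA x - DB x) * P (x / 2^N)" "DB x * (P (x / 2^N) - 1)"]
        by linarith
    qed
    show "\<forall>x\<in>{a..b}. \<bar>deriv (phil_hat \<theta> \<omega>0 lam nseq l) x - deriv (phiM_hat \<theta> \<omega>0) x\<bar> \<le> C * EE d l"
      using pw by (simp add: E_def)
  qed
qed

end


theorem lemma8:
  fixes \<theta> :: "real \<Rightarrow> real" and \<omega>0 :: real
    and lam :: "nat \<Rightarrow> nat \<Rightarrow> real" and nseq :: "nat \<Rightarrow> nat" and l0 :: nat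
  assumes odd: "\<And>x. \<theta> (- x) = - \<theta> x"
    and mono: "mono \<theta>"
    and C2: "\<And>x. \<theta> differentiable at x" "\<And>x. deriv \<theta> differentiable at x"
            "continuous_on UNIV (deriv (deriv \<theta>))"
    and flat: "\<And>x. x > pi / 3 \<Longrightarrow> \<theta> x = pi / 4"
    and w0: "pi / 3 \<le> \<omega>0" "\<omega>0 < pi / 2"
    and alpha_o: "(\<lambda>l. alpha \<theta> \<omega>0 lam nseq l) \<in> o(\<lambda>l. 1 / real l)"
    and gamma_o: "(\<lambda>l. gamma \<theta> \<omega>0 lam nseq l) \<in> o(\<lambda>l. 1)"
    and upi: "\<And>l. ul \<theta> \<omega>0 lam nseq l pi \<noteq> 0"
    and u0: "(INF l\<in>{l0..}. \<bar>ul \<theta> \<omega>0 lam nseq l 0\<bar>) > 0"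
    and ab: "a < b"
  shows "(\<lambda>l. supnorm {a..b}
            (\<lambda>\<omega>. deriv (phil_hat \<theta> \<omega>0 lam nseq l) \<omega> - deriv (phiM_hat \<theta> \<omega>0) \<omega>))
         \<in> O(\<lambda>l. mu \<theta> \<omega>0 lam nseq l)"
proof -
  interpret M: meyer2 \<theta> \<omega>0 lam nseq
    by unfold_locales (use odd C2 flat w0 in auto)
  obtain C where C: "\<And>l d. d > 0 \<Longrightarrow> \<bar>M.U l 0\<bar> \<ge> d \<Longrightarrow> M.EE d l \<le> 1 \<Longrightarrow> M.EE d l * \<omega>0 \<le> 1/4 \<Longrightarrow>
     (\<forall>x\<in>{a..b}. \<bar>deriv (phil_hat \<theta> \<omega>0 lam nseq l) x - deriv (phiM_hat \<theta> \<omega>0) x\<bar> \<le> C * M.EE d l)"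
    using M.main_bound[OF ab] by blast
  define \<delta> where "\<delta> = (INF l\<in>{l0..}. \<bar>ul \<theta> \<omega>0 lam nseq l 0\<bar>)"
  have \<delta>0: "\<delta> > 0" using u0 by (simp add: \<delta>_def)
  have \<delta>l: "\<bar>M.U l 0\<bar> \<ge> \<delta>" if "l \<ge> l0" for l
    unfolding \<delta>_def by (rule cINF_lower) (use that in \<open>auto intro!: bdd_belowI[of _ 0]\<close>)
  define K where "K = M.KM"
  have K0: "K \<ge> 0" using M.KM_nonneg by (simp add: K_def)
  define c where "c = \<delta> / ((2 + K) * (1 + 4 * \<omega>0))"
  have w0p: "\<omega>0 > 0" using M.w0pos .
  have c0: "c > 0" using \<delta>0 K0 w0p by (simp add: c_def)
  have gen: "X > 0 \<Longrightarrow> Y > 0 \<Longrightarrow> d > 0 \<Longrightarrow> X * (d / (X * Y)) / d = 1 / Y" for X Y d :: real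
    by (simp add: field_simps)
  have cK: "(2 + K) * c / \<delta> = 1 / (1 + 4 * \<omega>0)"
    unfolding c_def by (rule gen) (use \<delta>0 K0 w0p in auto)
  have ev1: "\<forall>\<^sub>F l in at_top. norm (M.al l) \<le> c * norm (1 / real l)"
    using landau_o.smallD[OF alpha_o c0] .
  have ev2: "\<forall>\<^sub>F l in at_top. norm (M.ga l) \<le> c * norm (1::real)"
    using landau_o.smallD[OF gamma_o c0] .
  define C' where "C' = max C 0 * (1 + K) / \<delta>"
  have "\<forall>\<^sub>F l in at_top. norm (supnorm {a..b}
            (\<lambda>\<omega>. deriv (phil_hat \<theta> \<omega>0 lam nseq l) \<omega> - deriv (phiM_hat \<theta> \<omega>0) \<omega>))
         \<le> C' * norm (mu \<theta> \<omega>0 lam nseq l)"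
    using ev1 ev2 eventually_ge_at_top[of "max l0 1"]
  proof eventually_elim
    case (elim l)
    have l1: "real l \<ge> 1" "l \<ge> l0" using elim(3) by auto
    have a0: "M.al l \<ge> 0" by (rule M.al_nonneg)
    have g0: "M.ga l \<ge> 0" by (rule M.ga_nonneg)
    have la: "real l * M.al l \<le> c"
    proof -
      have "M.al l \<le> c * (1 / real l)" using elim(1) a0 l1 by simp
      then have "real l * M.al l \<le> real l * (c * (1 / real l))" using l1 by (intro mult_left_mono) auto
      then show ?thesis using l1 by simp
    qed
    have al_le: "M.al l \<le> real l * M.al l" using a0 l1 by (simp add: mult_le_cancel_right1)
    have gc: "M.ga l \<le> c" using elim(2) g0 by simp
    have EEeq: "M.EE \<delta> l = (real l * M.al l + M.ga l + K * M.al l) / \<delta>" by (simp add: M.EE_def K_def)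
    have num: "real l * M.al l + M.ga l + K * M.al l \<le> (2 + K) * c"
    proof -
      have "K * M.al l \<le> K * c" using al_le la K0 by (intro mult_left_mono) auto
      then show ?thesis using la gc by (simp add: algebra_simps)
    qed
    have EEle: "M.EE \<delta> l \<le> 1 / (1 + 4 * \<omega>0)"
    proof -
      have "M.EE \<delta> l \<le> (2 + K) * c / \<delta>" unfolding EEeq using num \<delta>0 by (intro divide_right_mono) auto
      then show ?thesis using cK by simp
    qed
    have E1: "M.EE \<delta> l \<le> 1"
    proof -
      have "1 / (1 + 4 * \<omega>0) \<le> 1" using w0p by simp
      then show ?thesis using EEle by linarith
    qed
    have E4: "M.EE \<delta> l * \<omega>0 \<le> 1/4"
    proof -
      have "M.EE \<delta> l * \<omega>0 \<le> 1 / (1 + 4 * \<omega>0) * \<omega>0" using EEle w0p by (intro mult_right_mono) auto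
      also have "\<dots> \<le> 1/4" using w0p by (simp add: field_simps)
      finally show ?thesis .
    qed
    have pw: "\<forall>x\<in>{a..b}. \<bar>deriv (phil_hat \<theta> \<omega>0 lam nseq l) x - deriv (phiM_hat \<theta> \<omega>0) x\<bar> \<le> C * M.EE \<delta> l"
      by (rule C[OF \<delta>0 \<delta>l[OF l1(2)] E1 E4])
    have E0: "M.EE \<delta> l \<ge> 0" by (rule M.EE_nonneg[OF \<delta>0])
    have pw': "\<bar>deriv (phil_hat \<theta> \<omega>0 lam nseq l) x - deriv (phiM_hat \<theta> \<omega>0) x\<bar> \<le> max C 0 * M.EE \<delta> l"
      if "x \<in> {a..b}" for x
    proof -
      have "C * M.EE \<delta> l \<le> max C 0 * M.EE \<delta> l" using E0 by (intro mult_right_mono) auto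
      then show ?thesis using pw that by fastforce
    qed
    define s where "s = supnorm {a..b} (\<lambda>\<omega>. deriv (phil_hat \<theta> \<omega>0 lam nseq l) \<omega> - deriv (phiM_hat \<theta> \<omega>0) \<omega>)"
    have s1: "s \<le> max C 0 * M.EE \<delta> l" unfolding s_def by (rule supnorm_le) (use pw' ab in auto)
    have s0: "s \<ge> 0" unfolding s_def by (rule supnorm_nonneg[where x=a]) (use pw' ab in auto)
    have mu_eq: "mu \<theta> \<omega>0 lam nseq l = real l * M.al l + M.ga l" by (simp add: mu_def)
    have mu0: "mu \<theta> \<omega>0 lam nseq l \<ge> 0" unfolding mu_eq using a0 g0 l1 by simp
    have "real l * M.al l + M.ga l + K * M.al l \<le> (1 + K) * (real l * M.al l + M.ga l)"
    proof -
      have "K * M.al l \<le> K * (real l * M.al l)" using al_le K0 by (intro mult_left_mono) auto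
      moreover have "0 \<le> K * M.ga l" using K0 g0 by simp
      ultimately show ?thesis by (simp add: algebra_simps)
    qed
    then have "M.EE \<delta> l \<le> (1 + K) * mu \<theta> \<omega>0 lam nseq l / \<delta>"
      unfolding EEeq mu_eq using \<delta>0 by (intro divide_right_mono) auto
    then have "max C 0 * M.EE \<delta> l \<le> max C 0 * ((1 + K) * mu \<theta> \<omega>0 lam nseq l / \<delta>)"
      by (intro mult_left_mono) auto
    also have "\<dots> = C' * mu \<theta> \<omega>0 lam nseq l" by (simp add: C'_def)
    finally show ?case using s1 s0 mu0 by (simp add: s_def)
  qed
  then show ?thesis by (rule bigoI)
qed


end
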